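(* For every $\mathbf y\in\mathbb{R}^3$ and every integer $l\ge0$ there is a vector $Q^l(\mathbf y)=(Q^l_m(\mathbf y))_{m=-l}^{l}\in\mathbb{C}^{2l+1}$ of Euclidean norm $1$ such that, for every $\mathbf x\in\mathbb{R}^3$ with spherical coordinates $(R,\theta,\phi)$ and $R>r:=\|\mathbf y\|$, $$\log\|\mathbf x-\mathbf y\|=\log R-\sum_{n=1}^\infty\frac{a_n}{R^n}\sum_{l=0}^nL_{nl}\sqrt{\frac{4\pi}{2l+1}}\sum_{m=-l}^{l}Q^l_m(\mathbf y)\,Y_l^m(\theta,\phi),\qquad a_n=\frac{r^n}{n}.$$
   Context: Spherical coordinates $(R,\theta,\phi)$ are centered at the origin, with $\theta\in[0,\pi]$ the polar angle and $\phi\in[0,2\pi)$. The spherical harmonics are $Y_l^m(\theta,\phi)=\sqrt{\frac{2l+1}{4\pi}\frac{(l-|m|)!}{(l+|m|)!}}\,P_l^{|m|}(\cos\theta)e^{im\phi}$ for $l\ge0$, $-l\le m\le l$, where $P_n^m(x)=(-1)^m(1-x^2)^{m/2}\frac{d^m}{dx^m}P_n(x)$ and $P_n$ is the Legendre polynomial of degree $n$. With $\Lambda(z)=\frac{\Gamma(z+1/2)}{\Gamma(z+1)}$, the coefficients $L_{nl}$ ($0\le l\le n$) are $L_{nl}=1$ if $n=l=0$; $L_{nl}=\frac{\sqrt\pi}{2\Lambda(n)}$ if $n=l>0$; $L_{nl}=\frac{-n(l+1/2)}{(n+l+1)(n-l)}\Lambda\!\left(\frac{n-l-2}{2}\right)\Lambda\!\left(\frac{n+l-1}{2}\right)$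 if $n>l$ and $n+l$ is even; $L_{nl}=0$ otherwise. (These are the coefficients of the Chebyshev polynomial $T_n$ in the Legendre basis: $T_n=\sum_{l=0}^nL_{nl}P_l$.) *)

theory Defs
  imports "HOL-Analysis.Analysis" "HOL-Computational_Algebra.Polynomial"
begin

definition legendre_poly :: "nat \<Rightarrow> real poly" where
  "legendre_poly n = smult (1 / (2 ^ n * fact n)) ((pderiv ^^ n) ([:-1, 0, 1:] ^ n))"

definition assoc_legendre :: "nat \<Rightarrow> nat \<Rightarrow> real \<Rightarrow> real" where
  "assoc_legendre n m x = (-1) ^ m * sqrt (1 - x\<^sup>2) ^ m * poly ((pderiv ^^ m) (legendre_poly n)) x"

definition sph_harm :: "nat \<Rightarrow> int \<Rightarrow> real \<Rightarrow> real \<Rightarrow> complex" where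
  "sph_harm l m \<theta> \<phi> =
     complex_of_real (sqrt ((2 * real l + 1) / (4 * pi) * fact (l - nat \<bar>m\<bar>) / fact (l + nat \<bar>m\<bar>))
       * assoc_legendre l (nat \<bar>m\<bar>) (cos \<theta>)) * exp (\<i> * of_int m * of_real \<phi>)"

text \<open>Spherical coordinates of a point of R^3: polar angle in [0,pi], azimuth in [0,2pi).\<close>
definition sph_theta :: "real ^ 3 \<Rightarrow> real" where
  "sph_theta x = arccos (x $ 3 / norm x)"

definition sph_phi :: "real ^ 3 \<Rightarrow> real" where
  "sph_phi x = (let a = Arg (Complex (x $ 1) (x $ 2)) in if a < 0 then a + 2 * pi else a)"

definition Lam :: "real \<Rightarrow> real" where
  "Lam z = Gamma (z + 1/2) / Gamma (z + 1)"

definition Lcoef :: "nat \<Rightarrow> nat \<Rightarrow> real" where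
  "Lcoef n l =
    (if n = 0 \<and> l = 0 then 1
     else if n = l then sqrt pi / (2 * Lam (real n))
     else if l < n \<and> even (n + l) then
       (- (real n * (real l + 1/2)) / ((real n + real l + 1) * (real n - real l)))
         * Lam ((real n - real l - 2) / 2) * Lam ((real n + real l - 1) / 2)
     else 0)"

end

theory Submission
  imports Defs
begin

lemma coeff_lin_power: "coeff ([:b, a:] ^ n) k = of_nat (n choose k) * a ^ k * b ^ (n - k)"
  for a b :: "'a::comm_ring_1"
proof (cases "k \<le> n")
  case True then show ?thesis by (simp add: coeff_linear_poly_power)
next
  case False
  have "degree ([:b, a:] ^ n) \<le> n"
    by (rule order.trans[OF degree_power_le]) simp
  then show ?thesis using False by (simp add: coeff_eq_0 binomial_eq_0)
qed

lemma coeff_prod2: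
  "coeff ([:b, a:] ^ p * [:d, c:] ^ q) n =
   (\<Sum>i\<le>n. of_nat (p choose i) * a ^ i * b ^ (p - i) *
      (of_nat (q choose (n - i)) * c ^ (n - i) * d ^ (q - (n - i))))"
  for a b c d :: "'a::comm_ring_1"
  by (simp add: coeff_mult coeff_lin_power)

lemma higher_pderiv_pcompose_shift:
  "(pderiv ^^ N) (pcompose p [:y, 1:]) = pcompose ((pderiv ^^ N) p) [:y, 1:]"
  for y :: real
  by (induction N) (simp_all add: pderiv_pcompose pderiv_pCons)

lemma poly_higher_pderiv_taylor:
  fixes p :: "real poly"
  shows "poly ((pderiv ^^ N) p) y = fact N * coeff (pcompose p [:y, 1:]) N"
proof -
  have "poly ((pderiv ^^ N) p) y = poly (pcompose ((pderiv ^^ N) p) [:y,1:]) 0"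
    by (simp add: poly_pcompose)
  also have "\<dots> = coeff ((pderiv ^^ N) (pcompose p [:y,1:])) 0"
    by (simp add: higher_pderiv_pcompose_shift poly_0_coeff_0)
  also have "\<dots> = fact N * coeff (pcompose p [:y,1:]) N"
    by (simp add: coeff_higher_pderiv pochhammer_fact)
  finally show ?thesis .
qed

lemma u_pcompose: "pcompose ([:-1,0,1:] ^ l) [:y,1:] = [:y - 1, 1:] ^ l * [:y + 1, 1:] ^ l"
  for y :: real
proof -
  have h1: "pcompose [:-1,0,1:] [:y,1:] = [:y - 1, 1:] * [:y + 1, 1:]"
    by (simp add: pcompose_pCons algebra_simps)
  have h2: "pcompose (p ^ l) q = (pcompose p q) ^ l" for p q :: "real poly"
    by (induction l) (simp_all add: pcompose_mult pcompose_1)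
  show ?thesis by (simp only: h1 h2 power_mult_distrib)
qed

lemma legendre_deriv_eval:
  "poly ((pderiv ^^ m) (legendre_poly l)) y =
     fact (m + l) / (2 ^ l * fact l) * coeff ([:y - 1, 1:] ^ l * [:y + 1, 1:] ^ l) (m + l)"
proof -
  have "(pderiv ^^ m) (legendre_poly l) = smult (1 / (2 ^ l * fact l)) ((pderiv ^^ (m + l)) ([:-1,0,1:] ^ l))"
    unfolding legendre_poly_def higher_pderiv_smult funpow_add by simp
  then show ?thesis
    by (simp add: poly_higher_pderiv_taylor u_pcompose)
qed

lemma poly_ext: "(\<And>x. poly p x = poly q x) \<Longrightarrow> p = (q::real poly)"
  using poly_eq_poly_eq_iff[of p q] by auto

abbreviation uu :: "nat \<Rightarrow> real poly" where "uu l \<equiv> [:-1,0,1:] ^ l"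

definition cc :: "nat \<Rightarrow> real" where "cc l = 1 / (2 ^ l * fact l)"

lemma legendre_poly_cc: "legendre_poly l = smult (cc l) ((pderiv ^^ l) (uu l))"
  by (simp add: legendre_poly_def cc_def)

lemma cc_Suc: "cc (Suc l) * (2 * of_nat (Suc l)) = cc l"
proof -
  have "cc (Suc l) = cc l / (2 * of_nat (Suc l))" by (simp add: cc_def fact_Suc mult_ac)
  then show ?thesis by simp
qed

lemma pderiv_x: "pderiv [:0, 1:] = (1 :: real poly)"
  by (simp add: pderiv_pCons)

lemma higher_pderiv_xmult:
  "(pderiv ^^ Suc n) ([:0,1:] * f) = [:0,1:] * (pderiv ^^ Suc n) f + smult (of_nat (Suc n)) ((pderiv ^^ n) f)"
  for f :: "real poly"
proof (induction n)
  case 0 then show ?case by (simp add: pderiv_mult pderiv_x pderiv_pCons)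
next
  case (Suc n)
  have "(pderiv ^^ Suc (Suc n)) ([:0,1:] * f) = pderiv ((pderiv ^^ Suc n) ([:0,1:] * f))"
    by (simp only: funpow.simps o_apply)
  also have "\<dots> = pderiv ([:0,1:] * (pderiv ^^ Suc n) f + smult (of_nat (Suc n)) ((pderiv ^^ n) f))"
    by (simp only: Suc)
  also have "\<dots> = [:0,1:] * pderiv ((pderiv ^^ Suc n) f) + (pderiv ^^ Suc n) f
      + smult (of_nat (Suc n)) (pderiv ((pderiv ^^ n) f))"
    by (simp only: pderiv_add pderiv_smult pderiv_mult pderiv_x mult_1_right)
  also have "\<dots> = [:0,1:] * (pderiv ^^ Suc (Suc n)) f + smult (of_nat (Suc (Suc n))) ((pderiv ^^ Suc n) f)"
    by (intro poly_ext) (simp add: algebra_simps)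
  finally show ?case .
qed

lemma pderiv_uu: "pderiv (uu (Suc l)) = smult (2 * of_nat (Suc l)) ([:0,1:] * uu l)"
proof -
  have "pderiv [:-1,0,1::real:] = smult 2 [:0,1:]"
    by (simp add: pderiv_pCons)
  then show ?thesis
    by (simp only: pderiv_power_Suc) (simp add: algebra_simps)
qed

lemma xx_uu: "[:0,1:] * ([:0,1:] * uu l) = uu (Suc l) + uu l"
proof -
  have "[:0,1:] * [:0,1::real:] = [:-1,0,1:] + 1" by (simp add: one_pCons)
  then show ?thesis by (simp only: mult.assoc[symmetric] power_Suc distrib_right mult_1_left)
qed

abbreviation PP :: "nat \<Rightarrow> real poly" where "PP \<equiv> legendre_poly"

lemma leg_A: "pderiv (PP (Suc l)) = [:0,1:] * pderiv (PP l) + smult (of_nat (Suc l)) (PP l)"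
proof -
  have "pderiv (PP (Suc l)) = smult (cc (Suc l)) ((pderiv ^^ Suc l) (pderiv (uu (Suc l))))"
    by (simp only: legendre_poly_cc pderiv_smult funpow_swap1)
  also have "\<dots> = smult (cc (Suc l) * (2 * of_nat (Suc l)))
        ([:0,1:] * (pderiv ^^ Suc l) (uu l) + smult (of_nat (Suc l)) ((pderiv ^^ l) (uu l)))"
    by (simp only: pderiv_uu higher_pderiv_smult higher_pderiv_xmult smult_smult)
  also have "\<dots> = [:0,1:] * pderiv (PP l) + smult (of_nat (Suc l)) (PP l)"
    by (simp only: cc_Suc legendre_poly_cc pderiv_smult funpow.simps o_apply)
       (intro poly_ext, simp add: algebra_simps)
  finally show ?thesis .
qed

lemma leg_B: "pderiv (PP (Suc (Suc k))) = smult (2 * of_nat k + 3) (PP (Suc k)) + pderiv (PP k)"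
proof -
  have d2: "pderiv (pderiv (uu (Suc (Suc k)))) =
      smult (2 * of_nat (Suc (Suc k))) (smult (2 * of_nat k + 3) (uu (Suc k)) + smult (2 * of_nat (Suc k)) (uu k))"
  proof -
    have "pderiv (pderiv (uu (Suc (Suc k)))) = smult (2 * of_nat (Suc (Suc k)))
         (uu (Suc k) + [:0,1:] * pderiv (uu (Suc k)))"
      by (simp only: pderiv_uu pderiv_smult pderiv_mult pderiv_x mult_1_right add.commute)
    also have "\<dots> = smult (2 * of_nat (Suc (Suc k)))
         (uu (Suc k) + smult (2 * of_nat (Suc k)) (uu (Suc k) + uu k))"
      by (simp only: pderiv_uu mult_smult_right xx_uu)
    also have "\<dots> = smult (2 * of_nat (Suc (Suc k))) (smult (2 * of_nat k + 3) (uu (Suc k)) + smult (2 * of_nat (Suc k)) (uu k))"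
      by (intro poly_ext) (simp add: algebra_simps)
    finally show ?thesis .
  qed
  have "pderiv (PP (Suc (Suc k))) = smult (cc (Suc (Suc k))) ((pderiv ^^ Suc k) (pderiv (pderiv (uu (Suc (Suc k))))))"
  proof -
    have e: "(pderiv ^^ Suc (Suc k)) u = (pderiv ^^ Suc k) (pderiv u)" for u :: "real poly"
      by (metis comp_apply funpow_Suc_right)
    show ?thesis by (simp only: legendre_poly_cc pderiv_smult funpow_swap1 e)
  qed
  also have "\<dots> = smult (cc (Suc (Suc k)) * (2 * of_nat (Suc (Suc k))))
     (smult (2 * of_nat k + 3) ((pderiv ^^ Suc k) (uu (Suc k))) + smult (2 * of_nat (Suc k)) ((pderiv ^^ Suc k) (uu k)))"
    by (simp only: d2 higher_pderiv_smult higher_pderiv_add smult_smult)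
  also have "\<dots> = smult (2 * of_nat k + 3) (PP (Suc k)) + smult (cc (Suc k) * (2 * of_nat (Suc k))) ((pderiv ^^ Suc k) (uu k))"
    by (simp only: cc_Suc legendre_poly_cc smult_add_right smult_smult) (intro poly_ext, simp add: algebra_simps)
  also have "\<dots> = smult (2 * of_nat k + 3) (PP (Suc k)) + pderiv (PP k)"
    by (simp only: cc_Suc legendre_poly_cc pderiv_smult funpow.simps o_apply)
  finally show ?thesis .
qed

lemma PP_0: "PP 0 = 1" by (simp add: legendre_poly_def)
lemma PP_1: "PP (Suc 0) = [:0,1:]" by (simp add: legendre_poly_def pderiv_pCons)

lemma PP_at_1: "poly (PP l) 1 = 1"
proof -
  have "poly (PP l) 1 = poly ((pderiv ^^ 0) (legendre_poly l)) 1" by simp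
  also have "\<dots> = fact l / (2 ^ l * fact l) * coeff ([:0, 1:] ^ l * [:2, 1:] ^ l) l"
    by (subst legendre_deriv_eval) simp
  also have "coeff ([:0, 1:] ^ l * [:2::real, 1:] ^ l) l = (\<Sum>i\<le>l. if i = l then 2 ^ l else 0)"
    unfolding coeff_prod2 by (intro sum.cong refl) (auto simp: power_0_left)
  also have "\<dots> = 2 ^ l" by simp
  finally show ?thesis by simp
qed

lemma leg_A_ev: "poly (pderiv (PP (Suc l))) x = x * poly (pderiv (PP l)) x + of_nat (Suc l) * poly (PP l) x"
  by (simp only: leg_A) simp

lemma leg_B_ev: "poly (pderiv (PP (Suc (Suc k)))) x = (2 * of_nat k + 3) * poly (PP (Suc k)) x + poly (pderiv (PP k)) x"
  by (simp only: leg_B) simp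

lemma bonnet:
  "of_nat (Suc (Suc k)) * poly (PP (Suc (Suc k))) x =
     (2 * of_nat k + 3) * x * poly (PP (Suc k)) x - of_nat (Suc k) * poly (PP k) x"
proof -
  define Q where "Q = smult (of_nat (Suc (Suc k))) (PP (Suc (Suc k))) - smult (2 * of_nat k + 3) ([:0,1:] * PP (Suc k))
      + smult (of_nat (Suc k)) (PP k)"
  have "poly (pderiv Q) y = 0" for y
  proof -
    let ?a = "poly (pderiv (PP (Suc k))) y"
    have e1: "poly (pderiv Q) y = of_nat (Suc (Suc k)) * poly (pderiv (PP (Suc (Suc k)))) y
      - (2 * of_nat k + 3) * poly (PP (Suc k)) y - (2 * of_nat k + 3) * (y * ?a)
      + of_nat (Suc k) * poly (pderiv (PP k)) y"
      by (simp add: Q_def pderiv_add pderiv_diff pderiv_smult pderiv_mult pderiv_x pderiv_pCons algebra_simps)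
    have h2: "y * ?a = (of_nat k + 1) * poly (PP (Suc k)) y + poly (pderiv (PP k)) y"
      using leg_A_ev[of "Suc k" y] leg_B_ev[of k y] by (simp add: algebra_simps)
    have "poly (pderiv Q) y = of_nat (Suc (Suc k)) * ((2 * of_nat k + 3) * poly (PP (Suc k)) y + poly (pderiv (PP k)) y)
      - (2 * of_nat k + 3) * poly (PP (Suc k)) y - (2 * of_nat k + 3) * ((of_nat k + 1) * poly (PP (Suc k)) y + poly (pderiv (PP k)) y)
      + of_nat (Suc k) * poly (pderiv (PP k)) y"
      by (simp only: e1 leg_B_ev h2)
    then show ?thesis by (simp add: algebra_simps)
  qed
  then have "pderiv Q = 0" by (intro poly_ext) simp
  then have "degree Q = 0" by (simp add: pderiv_eq_0_iff)
  then have "poly Q x = poly Q 1"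
    by (metis degree_0_id poly_pCons mult_zero_right poly_0 add_0_right)
  also have "\<dots> = 0" by (simp add: Q_def PP_at_1)
  finally show ?thesis by (simp add: Q_def algebra_simps)
qed

lemma x_PP: "x * poly (PP l) x =
   (of_nat (Suc l) * poly (PP (Suc l)) x + of_nat l * poly (PP (l - 1)) x) / (2 * of_nat l + 1)"
proof (cases l)
  case 0 then show ?thesis by (simp add: PP_0 PP_1)
next
  case (Suc k)
  then show ?thesis using bonnet[of k x] by (simp add: field_simps)
qed

fun cheb :: "nat \<Rightarrow> real \<Rightarrow> real" where
  "cheb 0 x = 1" | "cheb (Suc 0) x = x" | "cheb (Suc (Suc n)) x = 2 * x * cheb (Suc n) x - cheb n x"

lemma cheb_cos: "cheb n (cos t) = cos (real n * t)"
proof -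
  have "cheb n (cos t) = cos (real n * t) \<and> cheb (Suc n) (cos t) = cos (real (Suc n) * t)"
  proof (induction n)
    case 0 then show ?case by simp
  next
    case (Suc n)
    have "cos (real (Suc (Suc n)) * t) = 2 * cos t * cos (real (Suc n) * t) - cos (real n * t)"
    proof -
      have "cos (real (Suc (Suc n)) * t) = cos (real (Suc n) * t + t)" by (simp add: algebra_simps)
      moreover have "cos (real n * t) = cos (real (Suc n) * t - t)" by (simp add: algebra_simps)
      ultimately show ?thesis by (simp add: cos_add cos_diff)
    qed
    then show ?case using Suc by simp
  qed
  then show ?thesis by simp
qed

lemma Gamma_plus1_pos: "z > 0 \<Longrightarrow> Gamma (z + 1) = z * Gamma (z::real)"
  by (rule Gamma_plus1) (auto dest: nonpos_Ints_nonpos)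

lemma Lam_pos: "z > -1/2 \<Longrightarrow> Lam z > 0"
  unfolding Lam_def by (intro divide_pos_pos Gamma_real_pos) simp_all

lemma Lam_step: assumes "z \<ge> 0" shows "Lam (z + 1) = Lam z * (z + 1/2) / (z + 1)"
proof -
  have e1: "Gamma (z + 1 + 1/2) = (z + 1/2) * Gamma (z + 1/2)"
    using Gamma_plus1_pos[of "z + 1/2"] assms by (simp add: add_ac)
  have e2: "Gamma (z + 1 + 1) = (z + 1) * Gamma (z + 1)"
    using Gamma_plus1_pos[of "z + 1"] assms by simp
  have "Gamma (z + 1) > 0" using assms by simp
  have "Lam (z + 1) = Gamma (z + 1 + 1/2) / Gamma (z + 1 + 1)" by (simp only: Lam_def)
  also have "\<dots> = ((z + 1/2) * Gamma (z + 1/2)) / ((z + 1) * Gamma (z + 1))" by (simp only: e1 e2)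
  also have "\<dots> = Lam z * (z + 1/2) / (z + 1)"
    unfolding Lam_def using \<open>Gamma (z + 1) > 0\<close> assms by (simp add: field_simps)
  finally show ?thesis .
qed

lemma aux_cancel: "a \<noteq> 0 \<Longrightarrow> b \<noteq> 0 \<Longrightarrow> c \<noteq> 0 \<Longrightarrow> a / b * (b / (c * a)) = 1 / (c::real)"
  by (simp add: field_simps)

lemma Lam_half: assumes "z \<ge> 0" shows "Lam z * Lam (z + 1/2) = 1 / (z + 1/2)"
proof -
  have e1: "Gamma (z + 1/2 + 1) = (z + 1/2) * Gamma (z + 1/2)"
    using Gamma_plus1_pos[of "z + 1/2"] assms by simp
  have "Gamma (z + 1) > 0" "Gamma (z + 1/2) > 0" using assms by simp_all
  have "Lam z * Lam (z + 1/2) = Gamma (z + 1/2) / Gamma (z + 1) * (Gamma (z + 1/2 + 1/2) / Gamma (z + 1/2 + 1))"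
    by (simp only: Lam_def)
  also have "z + 1/2 + 1/2 = z + 1" by simp
  also note e1
  also have "Gamma (z + 1/2) / Gamma (z + 1) * (Gamma (z + 1) / ((z + 1/2) * Gamma (z + 1/2))) = 1 / (z + 1/2)"
  proof -
    have n1: "Gamma (z + 1) \<noteq> 0" using \<open>Gamma (z + 1) > 0\<close> by linarith
    have n2: "Gamma (z + 1/2) \<noteq> 0" using \<open>Gamma (z + 1/2) > 0\<close> by linarith
    have n3: "z + 1/2 \<noteq> 0" using assms by linarith
    show ?thesis by (rule aux_cancel[OF n2 n1 n3])
  qed
  finally show ?thesis .
qed

lemma Lam_0: "Lam 0 = sqrt pi"
  unfolding Lam_def by (simp add: Gamma_one_half_real)

lemma Lam_1: "Lam 1 = sqrt pi / 2"
  using Lam_step[of 0] by (simp add: Lam_0)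

lemma Lcoef_gen: "l < n \<Longrightarrow> even (n + l) \<Longrightarrow> Lcoef n l =
   - (real n * (real l + 1/2)) / ((real n + real l + 1) * (real n - real l))
         * Lam ((real n - real l - 2) / 2) * Lam ((real n + real l - 1) / 2)"
  unfolding Lcoef_def by auto

lemma Lcoef_diag: "n \<ge> 1 \<Longrightarrow> Lcoef n n = sqrt pi / (2 * Lam (real n))"
  unfolding Lcoef_def by auto

lemma Lcoef_00: "Lcoef 0 0 = 1" unfolding Lcoef_def by auto

lemma Lcoef_zero: "n < l \<or> odd (n + l) \<Longrightarrow> Lcoef n l = 0"
  unfolding Lcoef_def by auto

lemma eq_divD: "D \<noteq> 0 \<Longrightarrow> X * D = Y * Z \<Longrightarrow> X = Y / D * (Z::real)"
  by (simp add: field_simps)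

lemma rec_identity:
  fixes n k La Lb :: real
  assumes "k \<ge> 0" "n \<ge> k + 3" "2 * k - 1 \<noteq> 0"
  shows "-((n+1)*(k+1/2))/((n+k+2)*(n+1-k)) * (La*((n-k-2)/2)/((n-k-1)/2)) * (Lb*((n+k-1)/2)/((n+k)/2)) =
 2*k/(2*k-1) * (-(n*(k-1+1/2))/((n+k)*(n-k+1)) * (La*((n-k-2)/2)/((n-k-1)/2)) * Lb)
 + 2*(k+1)/(2*k+3) * (-(n*(k+1+1/2))/((n+k+2)*(n-k-1)) * La * (Lb*((n+k-1)/2)/((n+k)/2)))
 - (-((n-1)*(k+1/2))/((n+k)*(n-1-k)) * La * Lb)"
proof -
  have h: "n+k+2 \<noteq> 0" "n+1-k \<noteq> 0" "n-k-1 \<noteq> 0" "n+k \<noteq> 0" "n-k+1 \<noteq> 0" "2*k+3 \<noteq> 0" "n-1-k \<noteq> 0"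
    using assms by linarith+
  define D where "D = (n+k)*(n-k-1)*(n+k+2)*(n-k+1)"
  have D: "D \<noteq> 0" using h by (simp add: D_def)
  have e0: "-((n+1)*(k+1/2))/((n+k+2)*(n+1-k)) * (La*((n-k-2)/2)/((n-k-1)/2)) * (Lb*((n+k-1)/2)/((n+k)/2))
      = (-(n+1)*(k+1/2)*(n-k-2)*(n+k-1)) / D * (La * Lb)"
    apply (rule eq_divD[OF D]) using h unfolding D_def apply (simp add: divide_simps) apply ((simp add: algebra_simps)?) done
  have e1: "2*k/(2*k-1) * (-(n*(k-1+1/2))/((n+k)*(n-k+1)) * (La*((n-k-2)/2)/((n-k-1)/2)) * Lb)
      = (-k*n*(n-k-2)*(n+k+2)) / D * (La * Lb)"
  proof -
    have "2*k/(2*k-1) * (k-1+1/2) = k" using assms(3) by (simp add: field_simps)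
    show ?thesis apply (rule eq_divD[OF D]) using h assms(3) unfolding D_def apply (simp add: divide_simps) apply ((simp add: algebra_simps)?) done
  qed
  have e2: "2*(k+1)/(2*k+3) * (-(n*(k+1+1/2))/((n+k+2)*(n-k-1)) * La * (Lb*((n+k-1)/2)/((n+k)/2)))
      = (-(k+1)*n*(n+k-1)*(n-k+1)) / D * (La * Lb)"
  proof -
    have "2*(k+1)/(2*k+3) * (k+1+1/2) = k + 1" using h by (simp add: field_simps)
    show ?thesis apply (rule eq_divD[OF D]) using h assms(3) unfolding D_def apply (simp add: divide_simps) apply ((simp add: algebra_simps)?) done
  qed
  have e3: "(-((n-1)*(k+1/2))/((n+k)*(n-1-k)) * La * Lb) = (-(n-1)*(k+1/2)*(n+k+2)*(n-k+1)) / D * (La * Lb)"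
    apply (rule eq_divD[OF D]) using h unfolding D_def apply (simp add: divide_simps) apply ((simp add: algebra_simps)?) done
  have poly: "-(n+1)*(k+1/2)*(n-k-2)*(n+k-1) = (-k*n*(n-k-2)*(n+k+2)) + (-(k+1)*n*(n+k-1)*(n-k+1))
       - (-(n-1)*(k+1/2)*(n+k+2)*(n-k+1))"
    by (simp add: algebra_simps divide_simps)
  show ?thesis unfolding e0 e1 e2 e3 poly
    by (simp add: diff_divide_distrib add_divide_distrib algebra_simps)
qed

lemma two_k_minus_1: "2 * real k - 1 \<noteq> 0"
proof
  assume "2 * real k - 1 = 0"
  then have "real (2 * k) = real 1" by simp
  then have "2 * k = 1" by (simp only: of_nat_eq_iff)
  then show False by presburger
qed

lemma Lcoef_gen_at:
  assumes "l < n" "even (n + l)" "real n = nn" "real l = ll" "(nn - ll - 2) / 2 = A" "(nn + ll - 1) / 2 = B"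
  shows "Lcoef n l = -(nn*(ll+1/2))/((nn+ll+1)*(nn-ll)) * Lam A * Lam B"
  using Lcoef_gen[OF assms(1,2)] assms(3-6) by simp

lemma Lcoef_rec:
  assumes N: "N \<ge> 1"
  shows "Lcoef (Suc N) k = (if k = 0 then 0 else 2 * real k / (2 * real k - 1) * Lcoef N (k - 1))
      + 2 * (real k + 1) / (2 * real k + 3) * Lcoef N (Suc k) - Lcoef (N - 1) k"
proof -
  have disj: "even (N + k) \<or> (odd (N + k) \<and> k > Suc N) \<or> k = Suc N \<or> k = N - 1 \<or> (odd (N + k) \<and> k + 3 \<le> N)"
    using N by presburger
  consider (z) "even (N + k)" | (big) "odd (N + k)" "k > Suc N" | (top) "k = Suc N" | (sub) "k = N - 1"
    | (gen) "odd (N + k)" "k + 3 \<le> N"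
    using disj by blast
  then show ?thesis
  proof cases
    case z
    have "Lcoef (Suc N) k = 0" using z by (intro Lcoef_zero) simp
    moreover have "k \<noteq> 0 \<Longrightarrow> Lcoef N (k - 1) = 0" using z by (intro Lcoef_zero) presburger
    moreover have "Lcoef N (Suc k) = 0" using z by (intro Lcoef_zero) simp
    moreover have "Lcoef (N - 1) k = 0" using z N by (intro Lcoef_zero) presburger
    ultimately show ?thesis by simp
  next
    case big
    have "Lcoef (Suc N) k = 0" using big by (intro Lcoef_zero disjI1) linarith
    moreover have "Lcoef N (k - 1) = 0" using big by (intro Lcoef_zero disjI1) linarith
    moreover have "Lcoef N (Suc k) = 0" using big by (intro Lcoef_zero disjI1) linarith
    moreover have "Lcoef (N - 1) k = 0" using big by (intro Lcoef_zero disjI1) linarith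
    ultimately show ?thesis by simp
  next
    case top
    have l0: "Lam (real N) > 0" by (rule Lam_pos) simp
    have st: "Lam (real (Suc N)) = Lam (real N) * (real N + 1/2) / (real N + 1)"
      using Lam_step[of "real N"] by (simp add: add.commute)
    have a0: "Lcoef (Suc N) (Suc N) = sqrt pi / (2 * Lam (real (Suc N)))" by (rule Lcoef_diag) simp
    have a: "Lcoef (Suc N) (Suc N) = sqrt pi * (real N + 1) / (2 * Lam (real N) * (real N + 1/2))"
      unfolding a0 st using l0 by (simp add: field_simps)
    have b: "Lcoef N N = sqrt pi / (2 * Lam (real N))" using N by (simp add: Lcoef_diag)
    have c: "Lcoef N (Suc (Suc N)) = 0" by (intro Lcoef_zero disjI1) linarith
    have d: "Lcoef (N - 1) (Suc N) = 0" by (intro Lcoef_zero disjI1) linarith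
    have nz: "real N + 1/2 \<noteq> 0" "2 * real N + 1 \<noteq> 0" by linarith+
    show ?thesis unfolding top using l0 nz
      apply (simp only: a b c d diff_Suc_1 diff_Suc_Suc minus_nat.diff_0 if_False nat.distinct(1) of_nat_Suc)
      apply (simp add: divide_simps)
      apply ((simp add: algebra_simps)?)
      done
  next
    case sub
    show ?thesis
    proof (cases "N = 1")
      case True
      then have k0: "k = 0" using sub by simp
      have "Lcoef 2 0 = -(1/6) * (Lam 0 * Lam (0 + 1/2))"
        by (subst Lcoef_gen) simp_all
      also have "\<dots> = -1/3" by (subst Lam_half) simp_all
      finally have a: "Lcoef 2 0 = -1/3" .
      have b: "Lcoef 1 1 = 1" by (simp add: Lcoef_diag Lam_1)
      show ?thesis using True k0 a b by (simp add: Lcoef_00 numeral_2_eq_2)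
    next
      case False
      then have N2: "N \<ge> 2" using N by simp
      define n where "n = real N"
      have n2: "n \<ge> 2" using N2 by (simp add: n_def)
      define lam where "lam = Lam (n - 1)"
      have lam0: "lam > 0" unfolding lam_def using n2 by (intro Lam_pos) simp
      have LN: "Lam n = lam * (n - 1/2) / n"
        using Lam_step[of "n - 1"] n2 by (simp add: lam_def algebra_simps)
      have Lh1: "Lam (n - 1/2) = 1 / ((n - 1/2) * lam)"
        using Lam_half[of "n - 1"] n2 lam0 by (simp add: lam_def field_simps)
      have Lh2: "Lam (n - 3/2) = 1 / ((n - 1) * lam)"
      proof -
        have "Lam (n - 3/2) * Lam (n - 3/2 + 1/2) = 1 / (n - 3/2 + 1/2)"
          using n2 by (intro Lam_half) simp
        moreover have eq: "n - 3/2 + 1/2 = n - 1" by simp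
        ultimately have H2: "Lam (n - 3/2) * lam = 1 / (n - 1)" unfolding eq lam_def by simp
        then show ?thesis using lam0 n2 by (simp add: field_simps)
      qed
      have e1: "Lcoef (Suc N) k = -((n+1)*((n-1)+1/2))/(((n+1)+(n-1)+1)*((n+1)-(n-1))) * Lam 0 * Lam (n - 1/2)"
        by (intro Lcoef_gen_at; (use sub N in \<open>simp add: n_def of_nat_diff field_simps\<close>)?; (use sub N in presburger)?)
      have e2: "Lcoef N (k - 1) = -(n*((n-2)+1/2))/((n+(n-2)+1)*(n-(n-2))) * Lam 0 * Lam (n - 3/2)"
        by (intro Lcoef_gen_at; (use sub N2 in \<open>simp add: n_def of_nat_diff field_simps\<close>)?; (use sub N2 in presburger)?)
      have e3: "Lcoef N (Suc k) = sqrt pi / (2 * Lam n)"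
        using sub N by (simp add: Lcoef_diag n_def)
      have e4: "Lcoef (N - 1) k = sqrt pi / (2 * lam)"
        using sub N2 by (simp add: Lcoef_diag n_def lam_def of_nat_diff)
      have kk: "real k = n - 1" using sub N by (simp add: n_def of_nat_diff)
      have nz: "2*n+1 \<noteq> 0" "2*n-1 \<noteq> 0" "n - 1/2 \<noteq> 0" "n - 1 \<noteq> 0" "n \<noteq> 0" "2*n-3 \<noteq> 0" "2 * n - 2 \<noteq> 0"
        using n2 by linarith+
      have "k \<noteq> 0" using sub N2 by simp
      then show ?thesis unfolding e1 e2 e3 e4 kk LN Lh1 Lh2 Lam_0 using nz lam0
        apply (simp add: divide_simps)
        apply ((simp add: algebra_simps)?)
        done
    qed
  next
    case gen
    define n where "n = real N"
    define kk where "kk = real k"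
    define a where "a = (n - kk - 3) / 2"
    define b where "b = (n + kk - 2) / 2"
    have a0: "a \<ge> 0" and b0: "b \<ge> 0" using gen by (simp_all add: a_def b_def n_def kk_def)
    have LA: "Lam (a + 1) = Lam a * ((n-kk-2)/2) / ((n-kk-1)/2)"
      using Lam_step[OF a0] by (simp add: a_def algebra_simps add_divide_distrib diff_divide_distrib)
    have LB: "Lam (b + 1) = Lam b * ((n+kk-1)/2) / ((n+kk)/2)"
      using Lam_step[OF b0] by (simp add: b_def algebra_simps add_divide_distrib diff_divide_distrib)
    have e1: "Lcoef (Suc N) k = -((n+1)*(kk+1/2))/(((n+1)+kk+1)*((n+1)-kk)) * Lam (a + 1) * Lam (b + 1)"
      by (intro Lcoef_gen_at; (use gen in \<open>simp add: n_def kk_def a_def b_def field_simps\<close>)?; (use gen in presburger)?)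
    have e2: "k \<noteq> 0 \<Longrightarrow> Lcoef N (k - 1) = -(n*((kk-1)+1/2))/((n+(kk-1)+1)*(n-(kk-1))) * Lam (a + 1) * Lam b"
      by (intro Lcoef_gen_at; (use gen in \<open>simp add: n_def kk_def a_def b_def of_nat_diff field_simps\<close>)?; (use gen in presburger)?)
    have e3: "Lcoef N (Suc k) = -(n*((kk+1)+1/2))/((n+(kk+1)+1)*(n-(kk+1))) * Lam a * Lam (b + 1)"
      by (intro Lcoef_gen_at; (use gen in \<open>simp add: n_def kk_def a_def b_def field_simps\<close>)?; (use gen in presburger)?)
    have e4: "Lcoef (N - 1) k = -((n-1)*(kk+1/2))/(((n-1)+kk+1)*((n-1)-kk)) * Lam a * Lam b"
      by (intro Lcoef_gen_at; (use gen in \<open>simp add: n_def kk_def a_def b_def of_nat_diff field_simps\<close>)?; (use gen in presburger)?)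
    have r1: "n+1+kk+1 = n+kk+2" and r2: "n+(kk-1)+1 = n+kk" and r3: "n-(kk-1) = n-kk+1"
      and r4: "n+(kk+1)+1 = n+kk+2" and r5: "n-(kk+1) = n-kk-1" and r6: "n-1+kk+1 = n+kk" by simp_all
    have ri: "-((n+1)*(kk+1/2))/((n+kk+2)*(n+1-kk)) * (Lam a*((n-kk-2)/2)/((n-kk-1)/2)) * (Lam b*((n+kk-1)/2)/((n+kk)/2)) =
       2*kk/(2*kk-1) * (-(n*(kk-1+1/2))/((n+kk)*(n-kk+1)) * (Lam a*((n-kk-2)/2)/((n-kk-1)/2)) * Lam b)
       + 2*(kk+1)/(2*kk+3) * (-(n*(kk+1+1/2))/((n+kk+2)*(n-kk-1)) * Lam a * (Lam b*((n+kk-1)/2)/((n+kk)/2)))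
       - (-((n-1)*(kk+1/2))/((n+kk)*(n-1-kk)) * Lam a * Lam b)"
      using gen two_k_minus_1[of k] by (intro rec_identity) (simp_all add: n_def kk_def)
    show ?thesis
    proof (cases "k = 0")
      case True
      then have "kk = 0" by (simp add: kk_def)
      with ri show ?thesis unfolding e1 e3 e4 LA LB r1 r4 r5 r6 using True by (simp add: kk_def)
    next
      case False
      with ri show ?thesis unfolding e1 e2[OF False] e3 e4 LA LB r1 r2 r3 r4 r5 r6 by (simp add: kk_def)
    qed
  qed
qed

lemma x_PP_term: "x * (c * poly (PP l) x) =
   c * (real (Suc l) * poly (PP (Suc l)) x / (2 * real l + 1)) + c * (real l * poly (PP (l - 1)) x / (2 * real l + 1))"
  by (simp only: mult.left_commute[of x] x_PP add_divide_distrib distrib_left)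

lemma x_sum:
  assumes c: "\<And>l. l > N \<Longrightarrow> c l = 0"
  shows "x * (\<Sum>l\<le>N. c l * poly (PP l) x) =
    (\<Sum>k\<le>Suc N. ((if k = 0 then 0 else c (k - 1) * real k / (2 * real k - 1))
        + c (Suc k) * (real k + 1) / (2 * real k + 3)) * poly (PP k) x)"
proof -
  let ?p = "\<lambda>l. poly (PP l) x"
  have "x * (\<Sum>l\<le>N. c l * ?p l) = (\<Sum>l\<le>N. c l * (real (Suc l) * ?p (Suc l) / (2 * real l + 1)))
      + (\<Sum>l\<le>N. c l * (real l * ?p (l - 1) / (2 * real l + 1)))"
    by (simp only: sum_distrib_left x_PP_term sum.distrib)
  also have "(\<Sum>l\<le>N. c l * (real (Suc l) * ?p (Suc l) / (2 * real l + 1))) = (\<Sum>l\<le>N. c l * real (Suc l) / (2 * real l + 1) * ?p (Suc l))"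
    by (simp add: algebra_simps)
  also have "(\<Sum>l\<le>N. c l * (real l * ?p (l - 1) / (2 * real l + 1))) = (\<Sum>l\<le>N. c l * real l / (2 * real l + 1) * ?p (l - 1))"
    by (simp add: algebra_simps)
  also have "(\<Sum>l\<le>N. c l * real (Suc l) / (2 * real l + 1) * ?p (Suc l)) =
      (\<Sum>k\<le>Suc N. (if k = 0 then 0 else c (k - 1) * real k / (2 * real k - 1)) * ?p k)"
    by (subst sum.atMost_Suc_shift) (simp add: algebra_simps)
  also have "(\<Sum>l\<le>N. c l * real l / (2 * real l + 1) * ?p (l - 1)) =
      (\<Sum>l\<le>Suc (Suc N). c l * real l / (2 * real l + 1) * ?p (l - 1))"
    using c by simp
  also have "\<dots> = (\<Sum>k\<le>Suc N. c (Suc k) * (real k + 1) / (2 * real k + 3) * ?p k)"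
    by (subst sum.atMost_Suc_shift) (simp add: algebra_simps)
  finally show ?thesis by (simp add: sum.distrib[symmetric] algebra_simps)
qed

lemma cheb_expand: "cheb n x = (\<Sum>l\<le>n. Lcoef n l * poly (PP l) x)"
proof -
  let ?p = "\<lambda>l. poly (PP l) x"
  have "cheb n x = (\<Sum>l\<le>n. Lcoef n l * ?p l) \<and> cheb (Suc n) x = (\<Sum>l\<le>Suc n. Lcoef (Suc n) l * ?p l)"
  proof (induction n)
    case 0
    have "Lcoef 1 0 = 0" by (intro Lcoef_zero) simp
    moreover have "Lcoef 1 1 = 1" by (simp add: Lcoef_diag Lam_1)
    ultimately show ?case by (simp add: Lcoef_00 PP_0 PP_1)
  next
    case (Suc n)
    define A where "A k = ((if k = 0 then 0 else Lcoef (Suc n) (k - 1) * real k / (2 * real k - 1))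
        + Lcoef (Suc n) (Suc k) * (real k + 1) / (2 * real k + 3))" for k
    have xs: "x * (\<Sum>l\<le>Suc n. Lcoef (Suc n) l * ?p l) = (\<Sum>k\<le>Suc (Suc n). A k * ?p k)"
      unfolding A_def by (rule x_sum) (intro Lcoef_zero disjI1, simp)
    have ext2: "(\<Sum>l\<le>n. Lcoef n l * ?p l) = (\<Sum>l\<le>Suc (Suc n). Lcoef n l * ?p l)"
    proof -
      have "Lcoef n (Suc n) = 0" "Lcoef n (Suc (Suc n)) = 0" by (intro Lcoef_zero disjI1, simp)+
      then show ?thesis by simp
    qed
    have tm: "Lcoef (Suc (Suc n)) k = 2 * A k - Lcoef n k" for k
    proof -
      have r: "Lcoef (Suc (Suc n)) k = (if k = 0 then 0 else 2 * real k / (2 * real k - 1) * Lcoef (Suc n) (k - 1))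
      + 2 * (real k + 1) / (2 * real k + 3) * Lcoef (Suc n) (Suc k) - Lcoef (Suc n - 1) k"
        by (rule Lcoef_rec) simp
      show ?thesis unfolding r A_def by (cases "k = 0") (simp_all add: field_simps)
    qed
    have "cheb (Suc (Suc n)) x = 2 * (x * (\<Sum>l\<le>Suc n. Lcoef (Suc n) l * ?p l)) - (\<Sum>l\<le>n. Lcoef n l * ?p l)"
      using Suc.IH by simp
    also have "\<dots> = 2 * (\<Sum>k\<le>Suc (Suc n). A k * ?p k) - (\<Sum>l\<le>Suc (Suc n). Lcoef n l * ?p l)"
      by (simp only: xs ext2)
    also have "\<dots> = (\<Sum>k\<le>Suc (Suc n). (2 * A k - Lcoef n k) * ?p k)"
      by (simp only: left_diff_distrib mult.assoc sum_subtractf sum_distrib_left)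
    also have "\<dots> = (\<Sum>k\<le>Suc (Suc n). Lcoef (Suc (Suc n)) k * ?p k)"
      by (simp only: tm)
    finally show ?case using Suc.IH by simp
  qed
  then show ?thesis by simp
qed

lemma poly_ext_gen: "(\<And>x. poly p x = poly q x) \<Longrightarrow> p = (q::'a::{idom,ring_char_0} poly)"
  using poly_eq_poly_eq_iff[of p q] by auto

definition hsub :: "'a::{idom,ring_char_0} \<Rightarrow> 'a \<Rightarrow> 'a \<Rightarrow> 'a \<Rightarrow> nat \<Rightarrow> 'a poly \<Rightarrow> 'a poly" where
  "hsub a b c d N p = (\<Sum>i\<le>N. smult (coeff p i) ([:c, a:] ^ i * [:d, b:] ^ (N - i)))"

lemma coeff_lin_mult: "coeff ([:q, p:] * r) i = q * coeff r i + (if i = 0 then 0 else p * coeff r (i - 1))"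
  for p q :: "'a::{idom,ring_char_0}"
  by (cases i) (simp_all add: coeff_pCons)

lemma hsub_lin:
  fixes a b c d p q :: "'a::{idom,ring_char_0}"
  assumes "degree r \<le> N"
  shows "hsub a b c d (Suc N) ([:q, p:] * r) = [:p*c + q*d, p*a + q*b:] * hsub a b c d N r"
proof -
  let ?U = "[:c, a:]" and ?V = "[:d, b:]"
  have "hsub a b c d (Suc N) ([:q,p:]*r) =
      (\<Sum>i\<le>Suc N. smult (q * coeff r i) (?U^i * ?V^(Suc N - i)))
    + (\<Sum>i\<le>Suc N. smult (if i = 0 then 0 else p * coeff r (i - 1)) (?U^i * ?V^(Suc N - i)))"
    unfolding hsub_def coeff_lin_mult smult_add_left sum.distrib ..
  also have "(\<Sum>i\<le>Suc N. smult (q * coeff r i) (?U^i * ?V^(Suc N - i))) = smult q ?V * hsub a b c d N r"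
  proof -
    have "coeff r (Suc N) = 0" using assms by (intro coeff_eq_0) simp
    then have "(\<Sum>i\<le>Suc N. smult (q * coeff r i) (?U^i * ?V^(Suc N - i))) =
        (\<Sum>i\<le>N. smult (q * coeff r i) (?U^i * ?V^(Suc N - i)))" by simp
    also have "\<dots> = (\<Sum>i\<le>N. smult q ?V * smult (coeff r i) (?U^i * ?V^(N - i)))"
      by (intro sum.cong refl poly_ext_gen) (simp add: Suc_diff_le algebra_simps)
    finally show ?thesis by (simp add: hsub_def sum_distrib_left)
  qed
  also have "(\<Sum>i\<le>Suc N. smult (if i = 0 then 0 else p * coeff r (i - 1)) (?U^i * ?V^(Suc N - i))) =
      smult p ?U * hsub a b c d N r"
    by (subst sum.atMost_Suc_shift) (simp add: hsub_def sum_distrib_left, intro sum.cong refl poly_ext_gen, simp add: algebra_simps)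
  also have "smult q ?V * hsub a b c d N r + smult p ?U * hsub a b c d N r = [:p*c + q*d, p*a + q*b:] * hsub a b c d N r"
    by (intro poly_ext_gen) (simp add: algebra_simps)
  finally show ?thesis .
qed

lemma degree_lin_power_mult: "degree r \<le> N \<Longrightarrow> degree ([:q, p:] ^ k * r) \<le> k + N"
  for p q :: "'a::{idom,ring_char_0}"
proof -
  assume "degree r \<le> N"
  moreover have "degree ([:q, p:] ^ k) \<le> k"
    by (rule order.trans[OF degree_power_le]) simp
  ultimately show ?thesis by (meson add_mono degree_mult_le order.trans)
qed

lemma hsub_pow:
  fixes a b c d p q :: "'a::{idom,ring_char_0}"
  assumes "degree r \<le> N"
  shows "hsub a b c d (k + N) ([:q, p:] ^ k * r) = [:p*c + q*d, p*a + q*b:] ^ k * hsub a b c d N r"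
proof (induction k)
  case 0 then show ?case by simp
next
  case (Suc k)
  have "hsub a b c d (Suc k + N) ([:q, p:] ^ Suc k * r) = hsub a b c d (Suc (k + N)) ([:q, p:] * ([:q, p:] ^ k * r))"
    by (simp only: power_Suc mult.assoc add_Suc)
  also have "\<dots> = [:p*c + q*d, p*a + q*b:] * hsub a b c d (k + N) ([:q, p:] ^ k * r)"
    by (rule hsub_lin) (rule degree_lin_power_mult[OF assms])
  also have "\<dots> = [:p*c + q*d, p*a + q*b:] ^ Suc k * hsub a b c d N r"
    by (simp only: Suc.IH power_Suc mult.assoc)
  finally show ?case .
qed

lemma hsub_one: "hsub a b c d 0 1 = 1"
  by (simp add: hsub_def)

lemma hsub_prod:
  fixes a b c d a' b' c' d' :: "'a::{idom,ring_char_0}"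
  shows "hsub a b c d (l + l) ([:c', a':] ^ l * [:d', b':] ^ l) =
    [:a'*c + c'*d, a'*a + c'*b:] ^ l * [:b'*c + d'*d, b'*a + d'*b:] ^ l"
proof -
  have d1: "degree ([:d', b':] ^ l * 1) \<le> l + 0"
    using degree_lin_power_mult[of 1 0 d' b' l] by simp
  have "hsub a b c d (l + l) ([:c', a':] ^ l * [:d', b':] ^ l) =
      hsub a b c d (l + (l + 0)) ([:c', a':] ^ l * ([:d', b':] ^ l * 1))" by simp
  also have "\<dots> = [:a'*c + c'*d, a'*a + c'*b:] ^ l * hsub a b c d (l + 0) ([:d', b':] ^ l * 1)"
    by (rule hsub_pow[OF d1])
  also have "hsub a b c d (l + 0) ([:d', b':] ^ l * 1) = [:b'*c + d'*d, b'*a + d'*b:] ^ l * hsub a b c d 0 1"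
    by (rule hsub_pow) simp
  finally show ?thesis by (simp add: hsub_one)
qed

lemma coeff_hsub: "coeff (hsub a b c d N p) n = (\<Sum>i\<le>N. coeff p i * coeff ([:c, a:] ^ i * [:d, b:] ^ (N - i)) n)"
  by (simp add: hsub_def coeff_sum)

lemma composition:
  fixes a b c d a' b' c' d' :: "'a::{idom,ring_char_0}"
  shows "coeff ([:a'*c + c'*d, a'*a + c'*b:] ^ l * [:b'*c + d'*d, b'*a + d'*b:] ^ l) n =
    (\<Sum>j\<le>l + l. coeff ([:c', a':] ^ l * [:d', b':] ^ l) j * coeff ([:c, a:] ^ j * [:d, b:] ^ (l + l - j)) n)"
  using arg_cong[OF hsub_prod[of a b c d l c' a' d' b'], of "\<lambda>p. coeff p n"]
  by (simp add: coeff_hsub)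

definition RR :: "nat \<Rightarrow> nat \<Rightarrow> 'a::comm_ring_1 \<Rightarrow> 'a \<Rightarrow> 'a" where
  "RR l j s k = coeff ([:-s, k:] ^ l * [:k, s:] ^ l) j"

lemma RR_sum: "RR l j s k = (\<Sum>i\<le>j. of_nat (l choose i) * k ^ i * (-s) ^ (l - i) *
      (of_nat (l choose (j - i)) * s ^ (j - i) * k ^ (l - (j - i))))"
  by (simp add: RR_def coeff_prod2)

lemma RR_of_real: "complex_of_real (RR l j s k) = RR l j (complex_of_real s) (complex_of_real k)"
  by (simp add: RR_sum)

lemma AL_pow0:
  fixes sg kp :: real
  shows "(2 * sg * kp)^m * ((-2 * sg^2)^a * (2 * kp^2)^b) = 2^(m+a+b) * (kp^(m+b) * (-sg)^a * sg^(m+a) * kp^b)"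
proof -
  have h1: "(-2 * sg^2)^a = (-sg)^a * sg^a * 2^a"
  proof -
    have "-2 * sg^2 = (-sg) * sg * 2" by (simp add: power2_eq_square)
    then show ?thesis by (simp only: power_mult_distrib)
  qed
  have h2: "(2 * kp^2)^b = 2^b * kp^b * kp^b"
  proof -
    have "2 * kp^2 = 2 * kp * kp" by (simp add: power2_eq_square)
    then show ?thesis by (simp only: power_mult_distrib)
  qed
  have h3: "(2 * sg * kp)^m = 2^m * sg^m * kp^m" by (simp only: power_mult_distrib)
  show ?thesis unfolding h1 h2 h3 power_add by (simp only: mult_ac)
qed

lemma AL_pow:
  fixes sg kp x :: real
  assumes "sg^2 = (1-x)/2" "kp^2 = (1+x)/2" "i \<le> l" "j - i \<le> l" "i \<le> j" "l \<le> j"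
  shows "(2* sg* kp)^(j-l) * ((x-1)^(l-i) * (x+1)^(l-(j-i))) = 2^l * (kp^i * (-sg)^(l-i) * sg^(j-i) * kp^(l-(j-i)))"
proof -
  define m a b where "m = j - l" and "a = l - i" and "b = l - (j - i)"
  have e: "l = m + a + b" "i = m + b" "j = m + b + m + a"
    using assms(3-6) unfolding m_def a_def b_def by arith+
  have x1: "x - 1 = -2 * sg^2" "x + 1 = 2 * kp^2" using assms(1,2) by simp_all
  have "j - l = m" "l - i = a" "l - (j - i) = b" "j - i = m + a" unfolding m_def a_def b_def using assms(3-6) by arith+
  then show ?thesis unfolding x1 using AL_pow0[of sg kp m a b] e(1,2) by simp
qed

lemma helper1: "A * (c1 * 1^i * a1 * (c2 * 1^i' * a2)) = c1 * c2 * (A * (a1 * a2))" for A c1 c2 a1 a2 :: real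
  by (simp add: mult_ac)

lemma helper2: "B * (c1 * b1 * b2 * (c2 * b3 * b4)) = c1 * c2 * (B * (b1 * b2 * b3 * b4))" for B c1 c2 b1 b2 b3 b4 :: "'a::comm_ring_1"
  by (simp add: mult_ac)

lemma key_coeff:
  fixes sg kp x :: real
  assumes s2: "sg^2 = (1-x)/2" and k2: "kp^2 = (1+x)/2" and lj: "l \<le> j"
  shows "(2 * sg * kp)^(j-l) * coeff ([:x-1,1:]^l * [:x+1,1:]^l) j = 2^l * RR l j sg kp"
proof -
  have "(2 * sg * kp)^(j-l) * coeff ([:x-1,1:]^l * [:x+1,1:]^l) j =
    (\<Sum>i\<le>j. (2 * sg * kp)^(j-l) * (of_nat (l choose i) * 1^i * (x-1)^(l-i) *
        (of_nat (l choose (j-i)) * 1^(j-i) * (x+1)^(l-(j-i)))))"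
    by (simp only: coeff_prod2 sum_distrib_left)
  also have "\<dots> = (\<Sum>i\<le>j. 2^l * (of_nat (l choose i) * kp^i * (-sg)^(l-i) *
        (of_nat (l choose (j-i)) * sg^(j-i) * kp^(l-(j-i)))))"
  proof (intro sum.cong refl)
    fix i assume "i \<in> {..j}"
    then have ij: "i \<le> j" by simp
    show "(2 * sg * kp)^(j-l) * (of_nat (l choose i) * 1^i * (x-1)^(l-i) *
        (of_nat (l choose (j-i)) * 1^(j-i) * (x+1)^(l-(j-i)))) =
        2^l * (of_nat (l choose i) * kp^i * (-sg)^(l-i) * (of_nat (l choose (j-i)) * sg^(j-i) * kp^(l-(j-i))))"
    proof (cases "i \<le> l \<and> j - i \<le> l")
      case True
      have P: "(2* sg* kp)^(j-l) * ((x-1)^(l-i) * (x+1)^(l-(j-i))) = 2^l * (kp^i * (-sg)^(l-i) * sg^(j-i) * kp^(l-(j-i)))"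
        using True ij by (intro AL_pow s2 k2 lj) auto
      have "(2 * sg * kp)^(j-l) * (of_nat (l choose i) * 1^i * (x-1)^(l-i) *
        (of_nat (l choose (j-i)) * 1^(j-i) * (x+1)^(l-(j-i)))) =
        of_nat (l choose i) * of_nat (l choose (j-i)) * ((2 * sg * kp)^(j-l) * ((x-1)^(l-i) * (x+1)^(l-(j-i))))"
        by (simp add: mult_ac)
      also have "\<dots> = of_nat (l choose i) * of_nat (l choose (j-i)) * (2^l * (kp^i * (-sg)^(l-i) * sg^(j-i) * kp^(l-(j-i))))"
        by (simp only: P)
      also have "\<dots> = 2^l * (of_nat (l choose i) * kp^i * (-sg)^(l-i) * (of_nat (l choose (j-i)) * sg^(j-i) * kp^(l-(j-i))))"
        by (simp add: mult_ac)
      finally show ?thesis .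
    next
      case False
      then show ?thesis by auto
    qed
  qed
  also have "\<dots> = 2^l * RR l j sg kp" by (simp only: RR_sum sum_distrib_left)
  finally show ?thesis .
qed

lemma sqrt_one_minus_sq:
  fixes x :: real
  assumes "-1 \<le> x" "x \<le> 1"
  shows "sqrt (1 - x^2) = 2 * sqrt ((1-x)/2) * sqrt ((1+x)/2)"
proof -
  have "1 - x^2 = 4 * (((1-x)/2) * ((1+x)/2))" by (simp add: power2_eq_square field_simps)
  then have "sqrt (1 - x^2) = sqrt 4 * (sqrt ((1-x)/2) * sqrt ((1+x)/2))"
    by (simp only: real_sqrt_mult)
  also have "sqrt 4 = (2::real)" by (simp add: real_sqrt_eq_iff)
  finally show ?thesis by simp
qed

lemma AL_R:
  fixes x :: real
  assumes "-1 \<le> x" "x \<le> 1" "l \<le> j"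
  shows "assoc_legendre l (j - l) x = (-1)^(j-l) * (fact j / fact l) * RR l j (sqrt((1-x)/2)) (sqrt((1+x)/2))"
proof -
  define sg kp where "sg = sqrt((1-x)/2)" and "kp = sqrt((1+x)/2)"
  have s2: "sg^2 = (1-x)/2" and k2: "kp^2 = (1+x)/2" using assms by (simp_all add: sg_def kp_def)
  have sq: "sqrt (1 - x^2) = 2 * sg * kp" using sqrt_one_minus_sq[OF assms(1,2)] by (simp add: sg_def kp_def)
  have "assoc_legendre l (j - l) x = (-1)^(j-l) * (2 * sg * kp)^(j-l) *
      (fact j / (2 ^ l * fact l) * coeff ([:x - 1, 1:] ^ l * [:x + 1, 1:] ^ l) j)"
    unfolding assoc_legendre_def sq legendre_deriv_eval using assms(3) by simp
  also have "\<dots> = (-1)^(j-l) * (fact j / (2 ^ l * fact l)) * ((2 * sg * kp)^(j-l) * coeff ([:x - 1, 1:] ^ l * [:x + 1, 1:] ^ l) j)"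
    by (simp only: mult_ac)
  also have "\<dots> = (-1)^(j-l) * (fact j / (2 ^ l * fact l)) * (2^l * RR l j sg kp)"
    by (simp only: key_coeff[OF s2 k2 assms(3)])
  also have "\<dots> = (-1)^(j-l) * (fact j / fact l) * RR l j sg kp" by simp
  finally show ?thesis by (simp add: sg_def kp_def)
qed

lemma binom_id:
  assumes "i \<le> l" "i \<le> j" "j - i \<le> l" "j \<le> l + l"
  shows "(of_nat (j choose i) * of_nat ((l + l - j) choose (l - i)) :: 'a::field_char_0) =
     fact j * fact (l + l - j) / (fact l)^2 * (of_nat (l choose i) * of_nat (l choose (j - i)))"
proof -
  have e: "l + l - j - (l - i) = l - (j - i)" using assms by arith
  have a: "l - i \<le> l + l - j" using assms by arith
  show ?thesis
    unfolding binomial_fact[OF assms(2)] binomial_fact[OF a] binomial_fact[OF assms(1)] binomial_fact[OF assms(3)] e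
    by (simp add: field_simps power2_eq_square)
qed

lemma F_R:
  fixes sg kp :: "'a::field_char_0"
  assumes jl: "j \<le> l + l"
  shows "coeff ([:sg, kp:]^j * [:kp, -sg:]^(l + l - j)) l = fact j * fact (l + l - j) / (fact l)^2 * RR l j sg kp"
proof -
  define K :: 'a where "K = fact j * fact (l + l - j) / (fact l)^2"
  define f where "f i = of_nat (j choose i) * kp ^ i * sg ^ (j - i) *
      (of_nat ((l + l - j) choose (l - i)) * (-sg) ^ (l - i) * kp ^ (l + l - j - (l - i)))" for i
  define g where "g i = of_nat (l choose i) * kp ^ i * (-sg) ^ (l - i) *
      (of_nat (l choose (j - i)) * sg ^ (j - i) * kp ^ (l - (j - i)))" for i
  have lhs: "coeff ([:sg, kp:]^j * [:kp, -sg:]^(l + l - j)) l = (\<Sum>i\<le>l. f i)"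
    by (simp add: coeff_prod2 f_def)
  have rhs: "RR l j sg kp = (\<Sum>i\<le>j. g i)" by (simp add: RR_sum g_def)
  have f1: "(\<Sum>i\<le>l. f i) = (\<Sum>i\<le>min l j. f i)"
    by (rule sum.mono_neutral_right) (auto simp: f_def binomial_eq_0)
  have g1: "(\<Sum>i\<le>j. g i) = (\<Sum>i\<le>min l j. g i)"
    by (rule sum.mono_neutral_right) (auto simp: g_def binomial_eq_0)
  have fg: "f i = K * g i" if "i \<le> min l j" for i
  proof (cases "j - i \<le> l")
    case True
    have e: "l + l - j - (l - i) = l - (j - i)" using that True jl by arith
    have "f i = (of_nat (j choose i) * of_nat ((l + l - j) choose (l - i))) *
        (kp ^ i * (-sg) ^ (l - i) * sg ^ (j - i) * kp ^ (l - (j - i)))"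
      unfolding f_def e by (simp add: mult_ac)
    also have "\<dots> = K * (of_nat (l choose i) * of_nat (l choose (j - i))) *
        (kp ^ i * (-sg) ^ (l - i) * sg ^ (j - i) * kp ^ (l - (j - i)))"
      unfolding K_def using that True jl by (subst binom_id) auto
    also have "\<dots> = K * g i" unfolding g_def by (simp add: mult_ac)
    finally show ?thesis .
  next
    case False
    have il: "i \<le> l" "i \<le> j" using that by auto
    then have "l - i > l + l - j" using False jl by arith
    then show ?thesis using False by (simp add: f_def g_def binomial_eq_0)
  qed
  show ?thesis unfolding lhs rhs f1 g1 K_def[symmetric] sum_distrib_left
    by (intro sum.cong refl fg) simp
qed

lemma coeff_hsub_rev:
  fixes p :: "'a::{idom,ring_char_0} poly"
  assumes "n \<le> N"
  shows "coeff (hsub 0 1 1 0 N p) n = coeff p (N - n)"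
proof -
  have "coeff (hsub 0 1 1 0 N p) n = (\<Sum>i\<le>N. coeff p i * coeff ([:1, 0:] ^ i * [:0, 1:] ^ (N - i)) n)"
    by (rule coeff_hsub)
  also have "\<dots> = (\<Sum>i\<le>N. if i = N - n then coeff p i else 0)"
  proof (intro sum.cong refl)
    fix i assume "i \<in> {..N}"
    then have "i \<le> N" by simp
    have o: "[:1, 0:] = (1 :: 'a poly)" by (simp add: one_pCons)
    have "[:1, 0:] ^ i * [:0, 1:] ^ (N - i) = (monom 1 (N - i) :: 'a poly)"
      unfolding o by (simp add: monom_altdef)
    moreover have "(N - i = n) = (i = N - n)" using \<open>i \<le> N\<close> assms by arith
    ultimately show "coeff p i * coeff ([:1, 0:] ^ i * [:0, 1:] ^ (N - i)) n = (if i = N - n then coeff p i else 0)"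
      by simp
  qed
  also have "\<dots> = coeff p (N - n)" by simp
  finally show ?thesis .
qed

lemma RR_rev:
  fixes sg kp :: "'a::{idom,ring_char_0}"
  assumes "j \<le> l + l"
  shows "coeff ([:kp, -sg:]^l * [:sg, kp:]^l) j = RR l (l + l - j) sg kp"
proof -
  have "hsub 0 1 1 0 (l + l) ([:-sg, kp:] ^ l * [:kp, sg:] ^ l) = [:kp, -sg:]^l * [:sg, kp:]^l"
    using hsub_prod[of 0 1 1 0 l "-sg" kp kp sg] by simp
  then show ?thesis using coeff_hsub_rev[OF assms, of "[:-sg, kp:] ^ l * [:kp, sg:] ^ l"]
    by (simp add: RR_def)
qed

lemma RR_flip:
  fixes sg kp :: "'a::{idom,ring_char_0}"
  shows "coeff ([:kp, -sg:]^l * [:sg, kp:]^l) j = (-1)^(l+j) * RR l j sg kp"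
proof -
  have "coeff ([:kp, -sg:]^l * [:sg, kp:]^l) j = coeff ([:sg, kp:]^l * [:kp, -sg:]^l) j"
    by (simp only: mult.commute)
  also have "\<dots> = (\<Sum>i\<le>j. of_nat (l choose i) * kp ^ i * sg ^ (l - i) *
      (of_nat (l choose (j - i)) * (-sg) ^ (j - i) * kp ^ (l - (j - i))))"
    by (simp only: coeff_prod2)
  also have "\<dots> = (\<Sum>i\<le>j. (-1)^(l+j) * (of_nat (l choose i) * kp ^ i * (-sg) ^ (l - i) *
      (of_nat (l choose (j - i)) * sg ^ (j - i) * kp ^ (l - (j - i)))))"
  proof (intro sum.cong refl)
    fix i assume "i \<in> {..j}"
    then have ij: "i \<le> j" by simp
    show "of_nat (l choose i) * kp ^ i * sg ^ (l - i) *
      (of_nat (l choose (j - i)) * (-sg) ^ (j - i) * kp ^ (l - (j - i))) =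
      (-1)^(l+j) * (of_nat (l choose i) * kp ^ i * (-sg) ^ (l - i) *
      (of_nat (l choose (j - i)) * sg ^ (j - i) * kp ^ (l - (j - i))))"
    proof (cases "i \<le> l")
      case True
      have e: "l + j + (l - i) = (j - i) + 2 * l" using True ij by arith
      have s: "(-1::'a)^(l+j) * (-1)^(l - i) = (-1)^(j - i)"
        by (simp only: power_add[symmetric] e) (simp add: power_add power_mult)
      have "(-1)^(l+j) * (of_nat (l choose i) * kp ^ i * (-sg) ^ (l - i) *
        (of_nat (l choose (j - i)) * sg ^ (j - i) * kp ^ (l - (j - i)))) =
        ((-1)^(l+j) * (-1)^(l - i)) * (of_nat (l choose i) * kp ^ i * sg ^ (l - i) *
        (of_nat (l choose (j - i)) * sg ^ (j - i) * kp ^ (l - (j - i))))"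
        by (simp add: power_minus[of sg] mult_ac)
      also have "\<dots> = of_nat (l choose i) * kp ^ i * sg ^ (l - i) *
        (of_nat (l choose (j - i)) * (-sg) ^ (j - i) * kp ^ (l - (j - i)))"
        unfolding s by (simp add: power_minus[of sg] mult_ac)
      finally show ?thesis by (rule sym)
    next
      case False
      then show ?thesis by (simp add: binomial_eq_0)
    qed
  qed
  also have "\<dots> = (-1)^(l+j) * RR l j sg kp"
    by (simp only: RR_sum sum_distrib_left)
  finally show ?thesis .
qed

lemma RR_sym:
  fixes sg kp :: "'a::{idom,ring_char_0}"
  assumes "j \<le> l + l"
  shows "RR l (l + l - j) sg kp = (-1)^(l+j) * RR l j sg kp"
  using RR_rev[OF assms] RR_flip by metis

lemma E_R:
  fixes sg kp w cw :: complex
  assumes wc: "w * cw = 1"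
  shows "coeff ([:-(sg*cw), kp:]^l * [:kp, sg*w:]^l) j = w^j * cw^l * RR l j sg kp"
proof -
  have "coeff ([:-(sg*cw), kp:]^l * [:kp, sg*w:]^l) j = (\<Sum>i\<le>j. of_nat (l choose i) * kp ^ i * (-(sg*cw)) ^ (l - i) *
      (of_nat (l choose (j - i)) * (sg*w) ^ (j - i) * kp ^ (l - (j - i))))"
    by (simp only: coeff_prod2)
  also have "\<dots> = (\<Sum>i\<le>j. w^j * cw^l * (of_nat (l choose i) * kp ^ i * (-sg) ^ (l - i) *
      (of_nat (l choose (j - i)) * sg ^ (j - i) * kp ^ (l - (j - i)))))"
  proof (intro sum.cong refl)
    fix i assume "i \<in> {..j}"
    then have ij: "i \<le> j" by simp
    show "of_nat (l choose i) * kp ^ i * (-(sg*cw)) ^ (l - i) *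
      (of_nat (l choose (j - i)) * (sg*w) ^ (j - i) * kp ^ (l - (j - i))) =
      w^j * cw^l * (of_nat (l choose i) * kp ^ i * (-sg) ^ (l - i) *
      (of_nat (l choose (j - i)) * sg ^ (j - i) * kp ^ (l - (j - i))))"
    proof (cases "i \<le> l")
      case True
      have ww: "w^j * cw^l = w^(j-i) * cw^(l-i)"
      proof -
        have "w^j * cw^l = w^(j-i) * cw^(l-i) * (w * cw)^i"
          using True ij by (simp add: power_add[symmetric] power_mult_distrib mult_ac)
        then show ?thesis using wc by simp
      qed
      have n1: "(-(sg*cw))^(l-i) = (-sg)^(l-i) * cw^(l-i)" by (simp only: minus_mult_left power_mult_distrib)
      have n2: "(sg*w)^(j-i) = sg^(j-i) * w^(j-i)" by (simp only: power_mult_distrib)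
      show ?thesis unfolding ww n1 n2 by (simp add: mult_ac)
    next
      case False
      then show ?thesis by (simp add: binomial_eq_0)
    qed
  qed
  also have "\<dots> = w^j * cw^l * RR l j sg kp"
    by (simp only: RR_sum sum_distrib_left)
  finally show ?thesis .
qed

lemma P_comp:
  fixes A B C D :: complex and y :: real
  assumes ad: "A * D = complex_of_real ((1 + y) / 2)" and bc: "B * C = complex_of_real ((y - 1) / 2)"
  shows "coeff ([:C, A:]^l * [:D, B:]^l) l = complex_of_real (poly (PP l) y)"
proof -
  have "poly (PP l) y = poly ((pderiv ^^ 0) (PP l)) y" by simp
  also have "\<dots> = fact l / (2 ^ l * fact l) * coeff ([:y - 1, 1:] ^ l * [:y + 1, 1:] ^ l) l"
    by (subst legendre_deriv_eval) simp
  also have "\<dots> = (\<Sum>i\<le>l. of_nat (l choose i) * of_nat (l choose (l - i)) * (((y - 1)/2) ^ (l - i) * ((y + 1)/2) ^ i))"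
  proof -
    have "fact l / (2 ^ l * fact l) * coeff ([:y - 1, 1:] ^ l * [:y + 1, 1:] ^ l) l =
       (\<Sum>i\<le>l. of_nat (l choose i) * 1 ^ i * (y-1) ^ (l - i) *
         (of_nat (l choose (l - i)) * 1 ^ (l - i) * (y+1) ^ (l - (l - i)))) / 2^l"
      by (simp add: coeff_prod2)
    also have "\<dots> = (\<Sum>i\<le>l. of_nat (l choose i) * of_nat (l choose (l - i)) * (((y - 1)/2) ^ (l - i) * ((y + 1)/2) ^ i))"
      unfolding sum_divide_distrib
    proof (intro sum.cong refl)
      fix i assume "i \<in> {..l}"
      then have il: "i \<le> l" by simp
      have "(2::real)^l = 2^(l - i) * 2^i" using il by (simp add: power_add[symmetric])
      then show "of_nat (l choose i) * 1 ^ i * (y-1) ^ (l - i) *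
         (of_nat (l choose (l - i)) * 1 ^ (l - i) * (y+1) ^ (l - (l - i))) / 2^l =
         of_nat (l choose i) * of_nat (l choose (l - i)) * (((y - 1)/2) ^ (l - i) * ((y + 1)/2) ^ i)"
        using il by (simp add: power_divide)
    qed
    finally show ?thesis .
  qed
  finally have pl: "complex_of_real (poly (PP l) y) = (\<Sum>i\<le>l. of_nat (l choose i) * of_nat (l choose (l - i)) *
      ((B * C) ^ (l - i) * (A * D) ^ i))"
    unfolding ad bc by (simp add: add.commute)
  have "coeff ([:C, A:]^l * [:D, B:]^l) l = (\<Sum>i\<le>l. of_nat (l choose i) * A ^ i * C ^ (l - i) *
      (of_nat (l choose (l - i)) * B ^ (l - i) * D ^ (l - (l - i))))"
    by (simp only: coeff_prod2)
  also have "\<dots> = (\<Sum>i\<le>l. of_nat (l choose i) * of_nat (l choose (l - i)) * ((B * C) ^ (l - i) * (A * D) ^ i))"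
    by (intro sum.cong refl) (auto simp: power_mult_distrib mult_ac)
  finally show ?thesis using pl by simp
qed

lemma term_real:
  fixes x x' :: real
  assumes x: "-1 \<le> x" "x \<le> 1" and x': "-1 \<le> x'" "x' \<le> 1" and j: "j \<le> l + l"
  shows "fact (l - nat \<bar>int j - int l\<bar>) / fact (l + nat \<bar>int j - int l\<bar>) *
      assoc_legendre l (nat \<bar>int j - int l\<bar>) x * assoc_legendre l (nat \<bar>int j - int l\<bar>) x' =
    fact j * fact (l + l - j) / (fact l)^2 *
      (RR l j (sqrt((1-x)/2)) (sqrt((1+x)/2)) * RR l j (sqrt((1-x')/2)) (sqrt((1+x')/2)))"
proof -
  define R where "R = RR l j (sqrt((1-x)/2)) (sqrt((1+x)/2))"
  define R' where "R' = RR l j (sqrt((1-x')/2)) (sqrt((1+x')/2))"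
  have fl: "fact l \<noteq> (0::real)" by simp
  show ?thesis
  proof (cases "l \<le> j")
    case True
    have m: "nat \<bar>int j - int l\<bar> = j - l" using True by simp
    have a1: "assoc_legendre l (j - l) x = (-1)^(j-l) * (fact j / fact l) * R"
      unfolding R_def by (rule AL_R[OF x True])
    have a2: "assoc_legendre l (j - l) x' = (-1)^(j-l) * (fact j / fact l) * R'"
      unfolding R'_def by (rule AL_R[OF x' True])
    have e1: "l - (j - l) = l + l - j" "l + (j - l) = j" using True by simp_all
    have sg: "(-1::real)^(j-l) * (-1)^(j-l) = 1" by (simp add: power_add[symmetric] power_mult[symmetric] mult_2[symmetric])
    show ?thesis unfolding m a1 a2 e1 R_def[symmetric] R'_def[symmetric]
    proof -
      have "fact (l + l - j) / fact j * ((- 1) ^ (j - l) * (fact j / fact l) * R) * ((- 1) ^ (j - l) * (fact j / fact l) * R')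
        = ((-1::real)^(j-l) * (-1)^(j-l)) * (fact (l + l - j) / fact j * (fact j / fact l) * (fact j / fact l) * (R * R'))"
        by (simp only: mult_ac)
      also have "\<dots> = fact j * fact (l + l - j) / (fact l)^2 * (R * R')"
        unfolding sg using fl by (simp add: field_simps power2_eq_square)
      finally show "fact (l + l - j) / fact j * ((- 1) ^ (j - l) * (fact j / fact l) * R) * ((- 1) ^ (j - l) * (fact j / fact l) * R')
        = fact j * fact (l + l - j) / (fact l)^2 * (R * R')" .
    qed
  next
    case False
    have m: "nat \<bar>int j - int l\<bar> = l - j" using False by simp
    have jj: "l \<le> l + l - j" "l + l - j - l = l - j" "l + l - j \<le> l + l" "l - (l - j) = j" "l + (l - j) = l + l - j"
      using False j by simp_all
    have a1: "assoc_legendre l (l - j) x = (-1)^(l-j) * (fact (l + l - j) / fact l) * ((-1)^(l+j) * R)"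
      using AL_R[OF x jj(1)] RR_sym[OF j] unfolding jj(2) R_def by simp
    have a2: "assoc_legendre l (l - j) x' = (-1)^(l-j) * (fact (l + l - j) / fact l) * ((-1)^(l+j) * R')"
      using AL_R[OF x' jj(1)] RR_sym[OF j] unfolding jj(2) R'_def by simp
    have sg: "((-1::real)^(l-j) * (-1)^(l+j)) * ((-1)^(l-j) * (-1)^(l+j)) = 1"
      by (simp add: power_add[symmetric] power_mult[symmetric] mult_2[symmetric] mult_ac)
    show ?thesis unfolding m a1 a2 jj(4) jj(5) R_def[symmetric] R'_def[symmetric]
    proof -
      have "fact j / fact (l + l - j) * ((- 1) ^ (l - j) * (fact (l + l - j) / fact l) * ((- 1) ^ (l + j) * R)) *
          ((- 1) ^ (l - j) * (fact (l + l - j) / fact l) * ((- 1) ^ (l + j) * R'))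
        = (((-1::real)^(l-j) * (-1)^(l+j)) * ((-1)^(l-j) * (-1)^(l+j))) *
          (fact j / fact (l + l - j) * (fact (l + l - j) / fact l) * (fact (l + l - j) / fact l) * (R * R'))"
        by (simp only: mult_ac)
      also have "\<dots> = fact j * fact (l + l - j) / (fact l)^2 * (R * R')"
        unfolding sg using fl by (simp add: field_simps power2_eq_square)
      finally show "fact j / fact (l + l - j) * ((- 1) ^ (l - j) * (fact (l + l - j) / fact l) * ((- 1) ^ (l + j) * R)) *
          ((- 1) ^ (l - j) * (fact (l + l - j) / fact l) * ((- 1) ^ (l + j) * R'))
        = fact j * fact (l + l - j) / (fact l)^2 * (R * R')" .
    qed
  qed
qed

lemma cis_pow_combine: "cis t ^ j * cis (-t) ^ l = exp (\<i> * complex_of_int (int j - int l) * complex_of_real t)"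
proof -
  have "cis t ^ j * cis (-t) ^ l = cis (real j * t + real l * (-t))"
    by (simp only: Complex.DeMoivre cis_mult)
  also have "\<dots> = cis ((real j - real l) * t)" by (simp add: algebra_simps)
  also have "\<dots> = exp (\<i> * complex_of_int (int j - int l) * complex_of_real t)"
    by (simp add: cis_conv_exp mult_ac)
  finally show ?thesis .
qed

theorem addition_fourier:
  fixes x x' t :: real
  assumes x: "-1 \<le> x" "x \<le> 1" and x': "-1 \<le> x'" "x' \<le> 1"
  shows "complex_of_real (poly (PP l) (x * x' + sqrt (1 - x^2) * sqrt (1 - x'^2) * cos t)) =
    (\<Sum>m = -int l..int l. complex_of_real (fact (l - nat \<bar>m\<bar>) / fact (l + nat \<bar>m\<bar>) *
        assoc_legendre l (nat \<bar>m\<bar>) x * assoc_legendre l (nat \<bar>m\<bar>) x') * exp (\<i> * of_int m * of_real t))"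
proof -
  define sg kp sg' kp' where "sg = sqrt((1-x)/2)" and "kp = sqrt((1+x)/2)"
    and "sg' = sqrt((1-x')/2)" and "kp' = sqrt((1+x')/2)"
  have s2: "sg^2 = (1-x)/2" "kp^2 = (1+x)/2" "sg'^2 = (1-x')/2" "kp'^2 = (1+x')/2"
    using x x' by (simp_all add: sg_def kp_def sg'_def kp'_def)
  have sq: "sqrt (1 - x^2) = 2 * sg * kp" "sqrt (1 - x'^2) = 2 * sg' * kp'"
    using sqrt_one_minus_sq[OF x] sqrt_one_minus_sq[OF x'] by (simp_all add: sg_def kp_def sg'_def kp'_def)
  define y where "y = x * x' + sqrt (1 - x^2) * sqrt (1 - x'^2) * cos t"
  define w cw where "w = cis t" and "cw = cis (-t)"
  have wcw: "w * cw = 1" by (simp add: w_def cw_def cis_mult)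
  have wpcw: "w + cw = complex_of_real (2 * cos t)" by (simp add: w_def cw_def complex_eq_iff)
  let ?a = "complex_of_real kp'" and ?b = "- complex_of_real sg'" and ?c = "complex_of_real sg'" and ?d = "complex_of_real kp'"
  let ?a' = "complex_of_real kp" and ?b' = "complex_of_real sg * w" and ?c' = "-(complex_of_real sg * cw)" and ?d' = "complex_of_real kp"
  have comp: "coeff ([:?a'*?c + ?c'*?d, ?a'*?a + ?c'*?b:] ^ l * [:?b'*?c + ?d'*?d, ?b'*?a + ?d'*?b:] ^ l) l =
    (\<Sum>j\<le>l + l. coeff ([:?c', ?a':] ^ l * [:?d', ?b':] ^ l) j * coeff ([:?c, ?a:] ^ j * [:?d, ?b:] ^ (l + l - j)) l)"
    by (rule composition)
  have AD: "(?a'*?a + ?c'*?b) * (?b'*?c + ?d'*?d) = complex_of_real ((1 + y) / 2)"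
  proof -
    have "(?a'*?a + ?c'*?b) * (?b'*?c + ?d'*?d) = complex_of_real (kp^2 * kp'^2 + sg^2 * sg'^2) + complex_of_real (kp* kp'* sg* sg') * (w + cw)
        + complex_of_real (sg^2 * sg'^2) * (w * cw - 1)"
      by (simp add: algebra_simps power2_eq_square)
    also have "\<dots> = complex_of_real (kp^2 * kp'^2 + sg^2 * sg'^2 + 2 * kp* kp'* sg* sg' * cos t)"
      unfolding wpcw wcw by simp
    also have "kp^2 * kp'^2 + sg^2 * sg'^2 + 2 * kp* kp'* sg* sg' * cos t = (1 + y) / 2"
      unfolding y_def sq s2 by (simp add: field_simps)
    finally show ?thesis .
  qed
  have BC: "(?b'*?a + ?d'*?b) * (?a'*?c + ?c'*?d) = complex_of_real ((y - 1) / 2)"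
  proof -
    have "(?b'*?a + ?d'*?b) * (?a'*?c + ?c'*?d) = complex_of_real (sg* kp* sg'* kp') * (w + cw)
        - complex_of_real (sg^2 * kp'^2 + kp^2 * sg'^2) - complex_of_real (sg^2 * kp'^2) * (w * cw - 1)"
      by (simp add: algebra_simps power2_eq_square)
    also have "\<dots> = complex_of_real (2 * sg* kp* sg'* kp' * cos t - sg^2 * kp'^2 - kp^2 * sg'^2)"
      unfolding wpcw wcw by simp
    also have "2 * sg* kp* sg'* kp' * cos t - sg^2 * kp'^2 - kp^2 * sg'^2 = (y - 1) / 2"
      unfolding y_def sq s2 by (simp add: field_simps)
    finally show ?thesis .
  qed
  have lhs: "complex_of_real (poly (PP l) y) = (\<Sum>j\<le>l + l. coeff ([:?c', ?a':] ^ l * [:?d', ?b':] ^ l) j * coeff ([:?c, ?a:] ^ j * [:?d, ?b:] ^ (l + l - j)) l)"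
    using P_comp[OF AD BC, of l] comp by simp
  define f where "f j = complex_of_real (fact j * fact (l + l - j) / (fact l)^2 *
      (RR l j sg kp * RR l j sg' kp')) * (w^j * cw^l)" for j
  have fj: "coeff ([:?c', ?a':] ^ l * [:?d', ?b':] ^ l) j * coeff ([:?c, ?a:] ^ j * [:?d, ?b:] ^ (l + l - j)) l = f j"
    if "j \<le> l + l" for j
  proof -
    have e: "coeff ([:?c', ?a':] ^ l * [:?d', ?b':] ^ l) j = w^j * cw^l * RR l j (complex_of_real sg) (complex_of_real kp)"
      by (rule E_R[OF wcw])
    have fr: "coeff ([:?c, ?a:] ^ j * [:?d, ?b:] ^ (l + l - j)) l = fact j * fact (l + l - j) / (fact l)^2 * RR l j ?c ?a"
      by (rule F_R[OF that])
    show ?thesis unfolding e fr f_def RR_of_real[symmetric] by (simp add: mult_ac)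
  qed
  have "(\<Sum>m = -int l..int l. complex_of_real (fact (l - nat \<bar>m\<bar>) / fact (l + nat \<bar>m\<bar>) *
        assoc_legendre l (nat \<bar>m\<bar>) x * assoc_legendre l (nat \<bar>m\<bar>) x') * exp (\<i> * of_int m * of_real t))
     = (\<Sum>j\<le>l + l. f j)"
  proof (rule sum.reindex_bij_witness[where i = "\<lambda>j. int j - int l" and j = "\<lambda>m. nat (m + int l)"])
    fix m assume "m \<in> {-int l..int l}"
    then show "int (nat (m + int l)) - int l = m" by simp
  next
    fix m assume "m \<in> {-int l..int l}"
    then show "nat (m + int l) \<in> {..l + l}" by (simp add: nat_le_iff)
  next
    fix j assume "j \<in> {..l + l}"
    then show "nat (int j - int l + int l) = j" by simp
  next
    fix j assume "j \<in> {..l + l}"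
    then show "int j - int l \<in> {-int l..int l}" by simp
  next
    fix m assume mm: "m \<in> {-int l..int l}"
    define j where "j = nat (m + int l)"
    have mj: "m = int j - int l" and jl: "j \<le> l + l" using mm by (simp_all add: j_def nat_le_iff)
    show "f (nat (m + int l)) = complex_of_real (fact (l - nat \<bar>m\<bar>) / fact (l + nat \<bar>m\<bar>) *
        assoc_legendre l (nat \<bar>m\<bar>) x * assoc_legendre l (nat \<bar>m\<bar>) x') * exp (\<i> * of_int m * of_real t)"
      unfolding j_def[symmetric] unfolding mj f_def term_real[OF x x' jl] w_def cw_def cis_pow_combine
      by (simp add: sg_def kp_def sg'_def kp'_def)
  qed
  then show ?thesis using lhs fj by (simp add: y_def)
qed

lemma sph_harm_alt: "sph_harm l m th ph = complex_of_real (sqrt ((2 * real l + 1) / (4 * pi) * fact (l - nat \<bar>m\<bar>) / fact (l + nat \<bar>m\<bar>))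
       * assoc_legendre l (nat \<bar>m\<bar>) (cos th)) * exp (\<i> * of_int m * of_real ph)"
  by (simp add: sph_harm_def)

lemma sph_prod:
  "sph_harm l m th ph * cnj (sph_harm l m th' ph') =
    complex_of_real ((2 * real l + 1) / (4 * pi)) * (complex_of_real (fact (l - nat \<bar>m\<bar>) / fact (l + nat \<bar>m\<bar>) *
      assoc_legendre l (nat \<bar>m\<bar>) (cos th) * assoc_legendre l (nat \<bar>m\<bar>) (cos th')) *
      exp (\<i> * of_int m * of_real (ph - ph')))"
proof -
  define c where "c = (2 * real l + 1) / (4 * pi) * fact (l - nat \<bar>m\<bar>) / fact (l + nat \<bar>m\<bar>)"
  have c0: "c \<ge> 0" unfolding c_def by (intro divide_nonneg_nonneg mult_nonneg_nonneg) auto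
  have sc: "sqrt c * sqrt c = c" using c0 by simp
  have ex: "exp (\<i> * of_int m * of_real ph) * cnj (exp (\<i> * of_int m * of_real ph')) = exp (\<i> * of_int m * of_real (ph - ph'))"
    by (simp add: exp_cnj exp_add[symmetric] algebra_simps)
  define A where "A = assoc_legendre l (nat \<bar>m\<bar>) (cos th)"
  define A' where "A' = assoc_legendre l (nat \<bar>m\<bar>) (cos th')"
  define e where "e = exp (\<i> * of_int m * of_real ph)"
  define e' where "e' = exp (\<i> * of_int m * of_real ph')"
  have "sph_harm l m th ph * cnj (sph_harm l m th' ph') =
      complex_of_real (sqrt c * A * (sqrt c * A')) * (e * cnj e')"
    unfolding sph_harm_alt c_def[symmetric] A_def[symmetric] A'_def[symmetric] e_def[symmetric] e'_def[symmetric]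
    by (simp only: complex_cnj_mult complex_cnj_complex_of_real of_real_mult mult_ac)
  also have "sqrt c * A * (sqrt c * A') = (sqrt c * sqrt c) * A * A'" by (simp only: mult_ac)
  also note sc
  also have "e * cnj e' = exp (\<i> * of_int m * of_real (ph - ph'))" unfolding e_def e'_def by (rule ex)
  also have "complex_of_real (c * A * A') * exp (\<i> * of_int m * of_real (ph - ph')) =
     complex_of_real ((2 * real l + 1) / (4 * pi)) * (complex_of_real (fact (l - nat \<bar>m\<bar>) / fact (l + nat \<bar>m\<bar>) *
      A * A') * exp (\<i> * of_int m * of_real (ph - ph')))"
    unfolding c_def by (simp add: mult_ac)
  finally show ?thesis unfolding A_def A'_def .
qed

theorem sph_addition:
  "(\<Sum>m = -int l..int l. sph_harm l m th ph * cnj (sph_harm l m th' ph')) =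
    complex_of_real ((2 * real l + 1) / (4 * pi) *
      poly (legendre_poly l) (cos th * cos th' + sqrt (1 - (cos th)^2) * sqrt (1 - (cos th')^2) * cos (ph - ph')))"
proof -
  have "complex_of_real (poly (PP l) (cos th * cos th' + sqrt (1 - (cos th)^2) * sqrt (1 - (cos th')^2) * cos (ph - ph'))) =
    (\<Sum>m = -int l..int l. complex_of_real (fact (l - nat \<bar>m\<bar>) / fact (l + nat \<bar>m\<bar>) *
        assoc_legendre l (nat \<bar>m\<bar>) (cos th) * assoc_legendre l (nat \<bar>m\<bar>) (cos th')) * exp (\<i> * of_int m * of_real (ph - ph')))"
    by (rule addition_fourier) simp_all
  then show ?thesis unfolding sph_prod sum_distrib_left[symmetric] by simp
qed

lemma norm3_sq: "(norm x)^2 = (x$1)^2 + (x$2)^2 + (x$3)^2" for x :: "real^3"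
  unfolding power2_norm_eq_inner inner_vec_def sum_3 by (simp add: power2_eq_square)

lemma inner3: "x \<bullet> y = x$1 * y$1 + x$2 * y$2 + x$3 * y$3" for x y :: "real^3"
  by (simp add: inner_vec_def sum_3)

lemma phi_cos_sin:
  fixes x :: "real^3"
  shows "sqrt ((x$1)^2 + (x$2)^2) * cos (sph_phi x) = x$1 \<and> sqrt ((x$1)^2 + (x$2)^2) * sin (sph_phi x) = x$2"
proof -
  define z where "z = Complex (x$1) (x$2)"
  have cs: "cos (sph_phi x) = cos (Arg z) \<and> sin (sph_phi x) = sin (Arg z)"
    by (simp add: sph_phi_def Let_def z_def)
  have n: "cmod z = sqrt ((x$1)^2 + (x$2)^2)" by (simp add: z_def complex_norm)
  show ?thesis
  proof (cases "z = 0")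
    case True
    then have "x$1 = 0" "x$2 = 0" by (simp_all add: z_def complex_eq_iff)
    then show ?thesis by simp
  next
    case False
    then have "cmod z > 0" by simp
    then show ?thesis using cos_Arg[OF False] sin_Arg[OF False] cs n
      by (simp add: z_def field_simps)
  qed
qed

lemma theta_cos:
  fixes x :: "real^3"
  assumes "x \<noteq> 0"
  shows "cos (sph_theta x) = x$3 / norm x"
proof -
  have "\<bar>x$3\<bar> \<le> norm x" by (rule component_le_norm_cart)
  moreover have "norm x > 0" using assms by simp
  ultimately have "-1 \<le> x$3 / norm x" "x$3 / norm x \<le> 1" by (simp_all add: abs_le_iff field_simps)
  then show ?thesis by (simp add: sph_theta_def)
qed

lemma theta_sin:
  fixes x :: "real^3"
  assumes "x \<noteq> 0"
  shows "sqrt (1 - (cos (sph_theta x))^2) = sqrt ((x$1)^2 + (x$2)^2) / norm x"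
proof -
  have R: "norm x > 0" using assms by simp
  have "1 - (cos (sph_theta x))^2 = ((norm x)^2 - (x$3)^2) / (norm x)^2"
    unfolding theta_cos[OF assms] using R by (simp add: field_simps power_divide)
  also have "(norm x)^2 - (x$3)^2 = (x$1)^2 + (x$2)^2" using norm3_sq[of x] by simp
  finally have "1 - (cos (sph_theta x))^2 = ((x$1)^2 + (x$2)^2) / (norm x)^2" .
  then show ?thesis using R by (simp add: real_sqrt_divide)
qed

lemma angle_formula:
  fixes x y :: "real^3"
  assumes "x \<noteq> 0" "y \<noteq> 0"
  shows "cos (sph_theta x) * cos (sph_theta y) + sqrt (1 - (cos (sph_theta x))^2) * sqrt (1 - (cos (sph_theta y))^2)
      * cos (sph_phi x - sph_phi y) = (x \<bullet> y) / (norm x * norm y)"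
proof -
  define rx ry where "rx = sqrt ((x$1)^2 + (x$2)^2)" and "ry = sqrt ((y$1)^2 + (y$2)^2)"
  have px: "rx * cos (sph_phi x) = x$1" "rx * sin (sph_phi x) = x$2" using phi_cos_sin[of x] by (simp_all add: rx_def)
  have py: "ry * cos (sph_phi y) = y$1" "ry * sin (sph_phi y) = y$2" using phi_cos_sin[of y] by (simp_all add: ry_def)
  have R: "norm x > 0" "norm y > 0" using assms by simp_all
  have "rx * ry * cos (sph_phi x - sph_phi y) = (rx * cos (sph_phi x)) * (ry * cos (sph_phi y)) + (rx * sin (sph_phi x)) * (ry * sin (sph_phi y))"
    by (simp add: cos_diff algebra_simps)
  also have "\<dots> = x$1 * y$1 + x$2 * y$2" by (simp only: px py)
  finally have k: "rx * ry * cos (sph_phi x - sph_phi y) = x$1 * y$1 + x$2 * y$2" .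
  have "cos (sph_theta x) * cos (sph_theta y) + sqrt (1 - (cos (sph_theta x))^2) * sqrt (1 - (cos (sph_theta y))^2)
      * cos (sph_phi x - sph_phi y) = (x$3 * y$3 + rx * ry * cos (sph_phi x - sph_phi y)) / (norm x * norm y)"
    unfolding theta_sin[OF assms(1)] theta_sin[OF assms(2)] unfolding theta_cos[OF assms(1)] theta_cos[OF assms(2)]
    using R by (simp add: rx_def ry_def field_simps)
  also have "\<dots> = (x \<bullet> y) / (norm x * norm y)" unfolding k inner3 by (simp add: algebra_simps)
  finally show ?thesis .
qed

lemma log_series:
  fixes t psi :: real
  assumes t: "0 \<le> t" "t < 1"
  shows "(\<lambda>k. t^(Suc k) / real (Suc k) * cos (real (Suc k) * psi)) sums (- (ln (1 - 2 * t * cos psi + t^2) / 2))"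
proof -
  define z where "z = -(complex_of_real t * cis psi)"
  have cz: "cmod z = t" using t by (simp add: z_def norm_mult)
  have s1: "(\<lambda>n. -((-z)^n) / of_nat n) sums Ln (1 + z)"
    by (rule Ln_series') (simp add: cz t)
  have s2: "(\<lambda>n. Re (-((-z)^n) / of_nat n)) sums Re (Ln (1 + z))"
    by (rule sums_Re[OF s1])
  have tm: "Re (-((-z)^n) / of_nat n) = - (t^n / real n * cos (real n * psi))" for n
  proof -
    have "(-z)^n = complex_of_real (t^n) * cis (real n * psi)"
      by (simp add: z_def power_mult_distrib Complex.DeMoivre)
    then show ?thesis by (simp add: Re_divide_of_nat)
  qed
  have nz: "1 + z \<noteq> 0"
  proof
    assume "1 + z = 0"
    then have "z = -1" by (simp add: add_eq_0_iff)
    then have "cmod z = 1" by simp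
    then show False using cz t by simp
  qed
  have n2: "(cmod (1 + z))^2 = 1 - 2 * t * cos psi + t^2"
  proof -
    have "1 + z = Complex (1 - t * cos psi) (- (t * sin psi))" by (simp add: z_def complex_eq_iff cis.sel)
    then have "(cmod (1 + z))^2 = (1 - t * cos psi)^2 + (t * sin psi)^2" by (simp add: complex_norm)
    also have "(t * sin psi)^2 = t^2 - (t * cos psi)^2"
      by (simp only: power_mult_distrib sin_squared_eq) (simp add: algebra_simps)
    also have "(1 - t * cos psi)^2 + (t^2 - (t * cos psi)^2) = 1 - 2 * t * cos psi + t^2"
      by (simp add: power2_eq_square algebra_simps)
    finally show ?thesis .
  qed
  have lnv: "Re (Ln (1 + z)) = ln (1 - 2 * t * cos psi + t^2) / 2"
  proof -
    have "Re (Ln (1 + z)) = ln (cmod (1 + z))" by (rule Re_Ln[OF nz])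
    also have "cmod (1 + z) = sqrt ((cmod (1 + z))^2)" by simp
    also have "ln (sqrt ((cmod (1 + z))^2)) = ln ((cmod (1 + z))^2) / 2" by (rule ln_sqrt) simp
    finally show ?thesis unfolding n2 .
  qed
  have s3: "(\<lambda>n. t^n / real n * cos (real n * psi)) sums (- (ln (1 - 2 * t * cos psi + t^2) / 2))"
    using sums_minus[OF s2] unfolding tm lnv by simp
  then show ?thesis
    using sums_Suc_iff[of "\<lambda>n. t^n / real n * cos (real n * psi)"] by simp
qed

lemma norm_part:
  fixes th ph :: real
  shows "(\<Sum>m = - int l..int l. (cmod (complex_of_real (sqrt (4 * pi / (2 * real l + 1))) * cnj (sph_harm l m th ph)))\<^sup>2) = 1"
proof -
  define a where "a = 4 * pi / (2 * real l + 1)"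
  have a0: "a > 0" unfolding a_def by (simp add: pos_add_strict)
  have t1: "(cmod (complex_of_real (sqrt a) * cnj (sph_harm l m th ph)))\<^sup>2 = a * (cmod (sph_harm l m th ph))\<^sup>2" for m
    using a0 by (simp add: norm_mult power_mult_distrib)
  have "complex_of_real (\<Sum>m = - int l..int l. (cmod (sph_harm l m th ph))\<^sup>2) =
      (\<Sum>m = - int l..int l. sph_harm l m th ph * cnj (sph_harm l m th ph))"
    by (simp only: of_real_sum complex_norm_square)
  also have "\<dots> = complex_of_real ((2 * real l + 1) / (4 * pi) *
      poly (legendre_poly l) (cos th * cos th + sqrt (1 - (cos th)^2) * sqrt (1 - (cos th)^2) * cos (ph - ph)))"
    by (rule sph_addition)
  also have "cos th * cos th + sqrt (1 - (cos th)^2) * sqrt (1 - (cos th)^2) * cos (ph - ph) = 1"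
  proof -
    have "1 - (cos th)^2 = (sin th)^2" by (simp add: sin_squared_eq)
    then have "sqrt (1 - (cos th)^2) * sqrt (1 - (cos th)^2) = 1 - (cos th)^2" by (simp add: power2_eq_square)
    then show ?thesis by (simp add: power2_eq_square)
  qed
  finally have "complex_of_real (\<Sum>m = - int l..int l. (cmod (sph_harm l m th ph))\<^sup>2) =
     complex_of_real ((2 * real l + 1) / (4 * pi) * poly (PP l) 1)" .
  then have "(\<Sum>m = - int l..int l. (cmod (sph_harm l m th ph))\<^sup>2) = (2 * real l + 1) / (4 * pi) * poly (PP l) 1"
    by (simp only: of_real_eq_iff)
  then have "(\<Sum>m = - int l..int l. (cmod (sph_harm l m th ph))\<^sup>2) = (2 * real l + 1) / (4 * pi)"
    by (simp add: PP_at_1)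
  then show ?thesis unfolding a_def[symmetric] t1 sum_distrib_left[symmetric] unfolding a_def
    by (simp add: pos_add_strict)
qed

lemma series_part:
  fixes x y :: "real^3"
  assumes R: "norm x > norm y"
  shows "(\<lambda>k. let n = Suc k in complex_of_real ((norm y ^ n / real n) / norm x ^ n) *
      (\<Sum>l\<le>n. complex_of_real (Lcoef n l * sqrt (4 * pi / (2 * real l + 1))) *
        (\<Sum>m = - int l..int l. (complex_of_real (sqrt (4 * pi / (2 * real l + 1))) * cnj (sph_harm l m (sph_theta y) (sph_phi y)))
            * sph_harm l m (sph_theta x) (sph_phi x))))
    sums complex_of_real (ln (norm x) - ln (norm (x - y)))"
proof (cases "y = 0")
  case True
  have "(\<lambda>k. let n = Suc k in complex_of_real ((norm y ^ n / real n) / norm x ^ n) *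
      (\<Sum>l\<le>n. complex_of_real (Lcoef n l * sqrt (4 * pi / (2 * real l + 1))) *
        (\<Sum>m = - int l..int l. (complex_of_real (sqrt (4 * pi / (2 * real l + 1))) * cnj (sph_harm l m (sph_theta y) (sph_phi y)))
            * sph_harm l m (sph_theta x) (sph_phi x)))) = (\<lambda>k. 0)"
    using True by (simp add: Let_def)
  moreover have "complex_of_real (ln (norm x) - ln (norm (x - y))) = 0" using True by simp
  ultimately show ?thesis by simp
next
  case False
  have x0: "x \<noteq> 0" using R False by auto
  define r where "r = norm y"
  define RR0 where "RR0 = norm x"
  have r0: "r > 0" using False by (simp add: r_def)
  have Rr: "RR0 > r" using R by (simp add: r_def RR0_def)
  define c where "c = (x \<bullet> y) / (norm x * norm y)"
  have c1: "\<bar>c\<bar> \<le> 1"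
  proof -
    have cs: "\<bar>x \<bullet> y\<bar> \<le> norm x * norm y" by (rule Cauchy_Schwarz_ineq2)
    have p: "norm x * norm y > 0" using x0 False by simp
    have "\<bar>c\<bar> = \<bar>x \<bullet> y\<bar> / (norm x * norm y)" unfolding c_def using p by (simp only: abs_divide abs_of_pos)
    also have "\<dots> \<le> 1" using cs p by (simp only: divide_le_eq_1_pos)
    finally show ?thesis .
  qed
  define psi where "psi = arccos c"
  have cpsi: "cos psi = c" using c1 by (simp add: psi_def)
  define t where "t = r / RR0"
  have t0: "0 < t" "t < 1" using r0 Rr by (simp_all add: t_def)
  have inner: "(\<Sum>m = - int l..int l. (complex_of_real (sqrt (4 * pi / (2 * real l + 1))) * cnj (sph_harm l m (sph_theta y) (sph_phi y)))
            * sph_harm l m (sph_theta x) (sph_phi x)) =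
       complex_of_real (sqrt (4 * pi / (2 * real l + 1))) * complex_of_real ((2 * real l + 1) / (4 * pi) * poly (legendre_poly l) c)" for l
  proof -
    have "(\<Sum>m = - int l..int l. (complex_of_real (sqrt (4 * pi / (2 * real l + 1))) * cnj (sph_harm l m (sph_theta y) (sph_phi y)))
            * sph_harm l m (sph_theta x) (sph_phi x)) =
      complex_of_real (sqrt (4 * pi / (2 * real l + 1))) * (\<Sum>m = - int l..int l. sph_harm l m (sph_theta x) (sph_phi x) * cnj (sph_harm l m (sph_theta y) (sph_phi y)))"
      by (simp add: sum_distrib_left mult_ac)
    also note sph_addition
    also note angle_formula[OF x0 False]
    finally show ?thesis by (simp add: c_def)
  qed
  have lterm: "complex_of_real (Lcoef n l * sqrt (4 * pi / (2 * real l + 1))) *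
      (complex_of_real (sqrt (4 * pi / (2 * real l + 1))) * complex_of_real ((2 * real l + 1) / (4 * pi) * poly (legendre_poly l) c))
      = complex_of_real (Lcoef n l * poly (legendre_poly l) c)" for n l
  proof -
    define a where "a = 4 * pi / (2 * real l + 1)"
    have a0: "a > 0" unfolding a_def by (simp add: pos_add_strict)
    have e: "(2 * real l + 1) / (4 * pi) = 1 / a" by (simp add: a_def)
    have "Lcoef n l * sqrt a * (sqrt a * ((2 * real l + 1) / (4 * pi) * poly (legendre_poly l) c)) =
        Lcoef n l * poly (legendre_poly l) c * ((sqrt a * sqrt a) * (1 / a))"
      unfolding e by (simp only: mult_ac)
    also have "\<dots> = Lcoef n l * poly (legendre_poly l) c" using a0 by simp
    finally have "Lcoef n l * sqrt a * (sqrt a * ((2 * real l + 1) / (4 * pi) * poly (legendre_poly l) c)) =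
        Lcoef n l * poly (legendre_poly l) c" .
    then show ?thesis unfolding a_def[symmetric] by (simp only: of_real_mult[symmetric])
  qed
  have term_eq: "(let n = Suc k in complex_of_real ((norm y ^ n / real n) / norm x ^ n) *
      (\<Sum>l\<le>n. complex_of_real (Lcoef n l * sqrt (4 * pi / (2 * real l + 1))) *
        (\<Sum>m = - int l..int l. (complex_of_real (sqrt (4 * pi / (2 * real l + 1))) * cnj (sph_harm l m (sph_theta y) (sph_phi y)))
            * sph_harm l m (sph_theta x) (sph_phi x)))) =
      complex_of_real (t^(Suc k) / real (Suc k) * cos (real (Suc k) * psi))" for k
  proof -
    define n where "n = Suc k"
    have "(\<Sum>l\<le>n. complex_of_real (Lcoef n l * sqrt (4 * pi / (2 * real l + 1))) *
        (\<Sum>m = - int l..int l. (complex_of_real (sqrt (4 * pi / (2 * real l + 1))) * cnj (sph_harm l m (sph_theta y) (sph_phi y)))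
            * sph_harm l m (sph_theta x) (sph_phi x))) = complex_of_real (\<Sum>l\<le>n. Lcoef n l * poly (legendre_poly l) c)"
      unfolding inner lterm of_real_sum ..
    also have "(\<Sum>l\<le>n. Lcoef n l * poly (legendre_poly l) c) = cos (real n * psi)"
      using cheb_expand[of n c] cheb_cos[of n psi] cpsi by simp
    finally have s: "(\<Sum>l\<le>n. complex_of_real (Lcoef n l * sqrt (4 * pi / (2 * real l + 1))) *
        (\<Sum>m = - int l..int l. (complex_of_real (sqrt (4 * pi / (2 * real l + 1))) * cnj (sph_harm l m (sph_theta y) (sph_phi y)))
            * sph_harm l m (sph_theta x) (sph_phi x))) = complex_of_real (cos (real n * psi))" .
    have "(norm y ^ n / real n) / norm x ^ n = t ^ n / real n"
      by (simp add: t_def r_def RR0_def power_divide)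
    then show ?thesis unfolding n_def[symmetric] Let_def s by (simp only: of_real_mult[symmetric])
  qed
  have ls: "(\<lambda>k. t^(Suc k) / real (Suc k) * cos (real (Suc k) * psi)) sums (- (ln (1 - 2 * t * cos psi + t^2) / 2))"
    using log_series t0 by simp
  have val: "- (ln (1 - 2 * t * cos psi + t^2) / 2) = ln (norm x) - ln (norm (x - y))"
  proof -
    have pos: "1 - 2 * t * cos psi + t^2 > 0"
    proof -
      have "t * cos psi \<le> t" using t0 cpsi c1 by (simp add: mult_left_le abs_le_iff)
      then have "1 - 2 * t * cos psi + t^2 \<ge> (1 - t)^2" by (simp add: power2_eq_square algebra_simps)
      moreover have "(1 - t)^2 > 0" using t0 by simp
      ultimately show ?thesis by linarith
    qed
    have R0: "RR0 > 0" using Rr r0 by simp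
    have "(norm (x - y))^2 = (norm x)^2 - 2 * (x \<bullet> y) + (norm y)^2"
      by (simp add: power2_norm_eq_inner inner_diff_left inner_diff_right inner_commute)
    also have "x \<bullet> y = c * RR0 * r" using x0 False by (simp add: c_def RR0_def r_def)
    finally have n2: "(norm (x - y))^2 = RR0^2 - 2 * (c * RR0 * r) + r^2" by (simp add: RR0_def r_def)
    have n3: "RR0^2 * (1 - 2 * t * cos psi + t^2) = RR0^2 - 2 * (c * RR0 * r) + r^2"
      using R0 unfolding cpsi t_def by (simp add: field_simps power2_eq_square)
    have "(norm (x - y))^2 = RR0^2 * (1 - 2 * t * cos psi + t^2)" unfolding n2 n3 ..
    then have "ln ((norm (x - y))^2) = ln (RR0^2) + ln (1 - 2 * t * cos psi + t^2)"
      using R0 pos by (simp add: ln_mult)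
    moreover have "ln ((norm (x - y))^2) = 2 * ln (norm (x - y))" "ln (RR0^2) = 2 * ln RR0"
      using R0 by (simp_all add: ln_realpow)
    ultimately show ?thesis by (simp add: RR0_def)
  qed
  show ?thesis unfolding term_eq val[symmetric] by (rule sums_of_real[OF ls])
qed

theorem mainTheorem4:
  fixes y :: "real ^ 3"
  shows "\<exists>Q :: nat \<Rightarrow> int \<Rightarrow> complex.
           (\<forall>l. (\<Sum>m = - int l..int l. (cmod (Q l m))\<^sup>2) = 1) \<and>
           (\<forall>x :: real ^ 3. norm x > norm y \<longrightarrow>
              (\<lambda>k. let n = Suc k in
                  complex_of_real ((norm y ^ n / real n) / norm x ^ n) *
                  (\<Sum>l\<le>n. complex_of_real (Lcoef n l * sqrt (4 * pi / (2 * real l + 1))) *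
                     (\<Sum>m = - int l..int l. Q l m * sph_harm l m (sph_theta x) (sph_phi x))))
              sums complex_of_real (ln (norm x) - ln (norm (x - y))))"
  proof -
  define Q where "Q = (\<lambda>l m. complex_of_real (sqrt (4 * pi / (2 * real l + 1))) * cnj (sph_harm l m (sph_theta y) (sph_phi y)))"
  show ?thesis
  proof (intro exI[of _ Q] conjI allI impI)
    fix l
    show "(\<Sum>m = - int l..int l. (cmod (Q l m))\<^sup>2) = 1"
      using norm_part[of l "sph_theta y" "sph_phi y"] by (simp only: Q_def)
  next
    fix x :: "real ^ 3"
    assume "norm x > norm y"
    then show "(\<lambda>k. let n = Suc k in
                  complex_of_real ((norm y ^ n / real n) / norm x ^ n) *
                  (\<Sum>l\<le>n. complex_of_real (Lcoef n l * sqrt (4 * pi / (2 * real l + 1))) *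
                     (\<Sum>m = - int l..int l. Q l m * sph_harm l m (sph_theta x) (sph_phi x))))
              sums complex_of_real (ln (norm x) - ln (norm (x - y)))"
      using series_part[of y x] by (simp only: Q_def)
  qed
qed

end
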